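(* For $N\ge1$ start the one-dimensional nearest-neighbor symmetric simple exclusion process from the deterministic configuration $\xi^{\gamma_1,N}(x)=1$ for $|x|\le N$ and $\xi^{\gamma_1,N}(x)=0$ otherwise, and fix $T>0$. There is $c_1=c_1(T)>0$ such that for all $a\ge0$: $$\limsup_{N\to\infty}\frac1N\log P\big(|J_{-1,0}(N^2T)|/N\ge a\big)\le\begin{cases}-c_1a^2,&0\le a\le1,\\-\infty,&a>1,\end{cases}$$ $$\limsup_{N\to\infty}\frac1N\log P\big(|X_{N^2T}|/N\ge a\big)\le -c_1a^2.$$
   Context: The process $\eta_t$ on $\{0,1\}^{\mathbb Z}$ has generator $(L\phi)(\eta)=\frac12\sum_x[\eta(x)(1-\eta(x+1))+\eta(x+1)(1-\eta(x))](\phi(\eta^{x,x+1})-\phi(\eta))$, where $\eta^{x,x+1}$ exchanges the values at $x$ and $x+1$. $J_{-1,0}(t)$ is the number of jumps from $-1$ to $0$ minus the number of jumps from $0$ to $-1$ during $[0,t]$. $X_t$ is the position at time $t$ of the tagged particle initially at the origin. *)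

theory Defs
  imports "HOL-Probability.Probability"
begin

text \<open>Labelled representation of the nearest-neighbour SSEP on Z started from
 the configuration with particles exactly at the sites x with abs x \<le> N.
 Particles carry labels i in {-N..N}; particle i starts at site i (so the tagged
 particle initially at the origin has label 0).  A state is (pos, J): pos i is
 the current position of particle i, J the current J_{-1,0}.\<close>

type_synonym sstate = "(int \<Rightarrow> int) \<times> int"

definition labels :: "nat \<Rightarrow> int set" where
  "labels N = {- int N .. int N}"

definition occupied :: "nat \<Rightarrow> sstate \<Rightarrow> int set" where
  "occupied N s = fst s ` labels N"

definition try_jump :: "nat \<Rightarrow> sstate \<Rightarrow> int \<Rightarrow> int \<Rightarrow> sstate" where
  "try_jump N s i d =
     (let p = fst s i in
      if p + d \<in> occupied N s then s
      else ((fst s)(i := p + d),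
            snd s + (if p = -1 \<and> d = 1 then 1 else if p = 0 \<and> d = -1 then -1 else 0)))"

text \<open>Uniformised jump kernel with uniformisation rate lambda = 2N+1: each
 particle attempts each of its two jumps at rate 1/2.\<close>
definition kernel :: "nat \<Rightarrow> sstate \<Rightarrow> sstate pmf" where
  "kernel N s = pmf_of_set (labels N) \<bind> (\<lambda>i. pmf_of_set {-1, 1::int} \<bind>
                  (\<lambda>d. return_pmf (try_jump N s i d)))"

definition init_state :: sstate where
  "init_state = ((\<lambda>i. i), 0)"

definition iter_law :: "nat \<Rightarrow> nat \<Rightarrow> sstate pmf" where
  "iter_law N n = ((\<lambda>p. p \<bind> kernel N) ^^ n) (return_pmf init_state)"

definition unif_rate :: "nat \<Rightarrow> real" where
  "unif_rate N = 2 * real N + 1"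

text \<open>Probability that the state at time t lies in A (uniformisation formula
 P_t = sum_n Poisson(lambda t)(n) K^n, valid for t \<ge> 0).\<close>
definition ssep_prob :: "nat \<Rightarrow> real \<Rightarrow> sstate set \<Rightarrow> real" where
  "ssep_prob N t A = (\<Sum>n. exp (- unif_rate N * t) * (unif_rate N * t) ^ n / fact n
                         * measure_pmf.prob (iter_law N n) A)"

definition eln :: "real \<Rightarrow> ereal" where
  "eln p = (if p \<le> 0 then - \<infinity> else ereal (ln p))"

end

theory Submission
  imports Defs
begin


definition rr :: "nat \<Rightarrow> real" where "rr N = 1 / (2 * (2 * real N + 1))"
definition Pr :: "nat \<Rightarrow> (int \<Rightarrow> real) \<Rightarrow> int \<Rightarrow> real" where
  "Pr N f x = f x + rr N * (f (x+1) + f (x-1) - 2 * f x)"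
definition Lin :: "nat \<Rightarrow> (int \<Rightarrow> real) \<Rightarrow> sstate \<Rightarrow> real" where
  "Lin N h s = (\<Sum>i\<in>labels N. h (fst s i))"
definition cnt :: "nat \<Rightarrow> sstate \<Rightarrow> int" where
  "cnt N s = (\<Sum>i\<in>labels N. if fst s i \<ge> 0 then 1 else 0)"
definition Inv :: "nat \<Rightarrow> sstate \<Rightarrow> bool" where
  "Inv N s \<longleftrightarrow> (\<forall>i\<in>labels N. \<forall>j\<in>labels N. i < j \<longrightarrow> fst s i < fst s j)
      \<and> snd s = cnt N s - (int N + 1)"

lemma finite_labels[simp]: "finite (labels N)" by (simp add: labels_def)
lemma labels_ne[simp]: "labels N \<noteq> {}" by (simp add: labels_def)
lemma card_labels: "card (labels N) = 2 * N + 1"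
  unfolding labels_def by simp

lemma sum_upd:
  assumes "finite L" "i \<in> L"
  shows "(\<Sum>j\<in>L. \<phi> ((f(i := v)) j)) = (\<Sum>j\<in>L. \<phi> (f j)) - \<phi> (f i) + (\<phi> v :: 'b::ab_group_add)"
proof -
  have "(\<Sum>j\<in>L. \<phi> ((f(i := v)) j)) = \<phi> v + (\<Sum>j\<in>L-{i}. \<phi> ((f(i := v)) j))"
    using assms by (simp add: sum.remove)
  also have "(\<Sum>j\<in>L-{i}. \<phi> ((f(i := v)) j)) = (\<Sum>j\<in>L-{i}. \<phi> (f j))"
    by (rule sum.cong) auto
  also have "\<dots> = (\<Sum>j\<in>L. \<phi> (f j)) - \<phi> (f i)"
    using assms by (simp add: sum.remove)
  finally show ?thesis by (simp add: algebra_simps)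
qed

lemma Inv_try_jump:
  assumes I: "Inv N s" and i: "i \<in> labels N" and d: "d \<in> {-1, 1}"
  shows "Inv N (try_jump N s i d)"
proof (cases "fst s i + d \<in> occupied N s")
  case True
  then show ?thesis using I by (simp add: try_jump_def Let_def)
next
  case False
  let ?p = "fst s i"
  have nocc: "\<forall>k\<in>labels N. fst s k \<noteq> ?p + d" using False unfolding occupied_def by (metis image_eqI)
  have ord: "\<forall>j\<in>labels N. \<forall>k\<in>labels N. j < k \<longrightarrow> fst s j < fst s k" using I by (simp add: Inv_def)
  have tj: "try_jump N s i d = ((fst s)(i := ?p + d),
            snd s + (if ?p = -1 \<and> d = 1 then 1 else if ?p = 0 \<and> d = -1 then -1 else 0))"
    using False by (simp add: try_jump_def Let_def)
  have o2: "\<forall>j\<in>labels N. \<forall>k\<in>labels N. j < k \<longrightarrow> ((fst s)(i := ?p + d)) j < ((fst s)(i := ?p + d)) k"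
  proof (intro ballI impI)
    fix j k assume j: "j \<in> labels N" and k: "k \<in> labels N" and jk: "j < k"
    show "((fst s)(i := ?p + d)) j < ((fst s)(i := ?p + d)) k"
    proof (cases "j = i")
      case True
      then have "k \<noteq> i" using jk by auto
      moreover have "fst s i < fst s k" using ord True j k jk by auto
      moreover have "fst s k \<noteq> ?p + d" using nocc k by auto
      ultimately show ?thesis using True d by auto
    next
      case False
      show ?thesis
      proof (cases "k = i")
        case True
        have "fst s j < fst s i" using ord True j k jk by auto
        moreover have "fst s j \<noteq> ?p + d" using nocc j by auto
        ultimately show ?thesis using True False d by auto
      next
        case False2: False
        then show ?thesis using False ord j k jk by auto
      qed
    qed
  qed
  have c2: "cnt N ((fst s)(i := ?p + d), x) = cnt N s - (if ?p \<ge> 0 then 1 else 0) + (if ?p + d \<ge> 0 then 1 else 0)" for x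
    unfolding cnt_def using sum_upd[OF finite_labels i, of "\<lambda>v. if v \<ge> 0 then (1::int) else 0" "fst s" "?p + d"]
    by simp
  show ?thesis using I o2 d unfolding tj Inv_def by (auto simp: c2)
qed

definition Qs :: "nat \<Rightarrow> (int \<Rightarrow> real) \<Rightarrow> sstate \<Rightarrow> real" where
  "Qs N h s = rr N * (\<Sum>i\<in>labels N. (h (fst s i + 1) - h (fst s i))^2 + (h (fst s i - 1) - h (fst s i))^2)"

lemma exp_quad_bound:
  fixes u B :: real assumes "\<bar>u\<bar> \<le> B"
  shows "exp u \<le> 1 + u + u^2 * exp B / 2"
proof -
  obtain t where t: "\<bar>t\<bar> \<le> \<bar>u\<bar>" "exp u = (\<Sum>m<2. (u ^ m) / fact m) + (exp t / fact 2) * u ^ 2"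
    using Maclaurin_exp_le[of u 2] by blast
  have "exp t \<le> exp B" using t(1) assms by simp
  then have "exp t * u^2 \<le> exp B * u^2" by (rule mult_right_mono) auto
  then have "(exp t / 2) * u^2 \<le> u^2 * exp B / 2" by (simp add: mult.commute)
  moreover have "(\<Sum>m<2. (u ^ m) / fact m) = 1 + u" by (simp add: numeral_2_eq_2)
  ultimately show ?thesis using t(2) by (simp add: numeral_2_eq_2)
qed

lemma Inv_inj: "Inv N s \<Longrightarrow> inj_on (fst s) (labels N)"
  unfolding Inv_def inj_on_def by (metis less_irrefl linorder_neqE)

lemma sum_img:
  assumes "inj_on p L" "finite L"
  shows "(\<Sum>i\<in>{i\<in>L. P (p i)}. \<psi> (p i)) = (\<Sum>x\<in>{x\<in>p ` L. P x}. \<psi> x)"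
proof -
  have "{x\<in>p ` L. P x} = p ` {i\<in>L. P (p i)}" by auto
  moreover have "inj_on p {i\<in>L. P (p i)}" using assms(1) by (auto simp: inj_on_def)
  ultimately show ?thesis by (simp add: sum.reindex)
qed

lemma aux_eq1: "a = b + c \<Longrightarrow> c = d \<Longrightarrow> b = a - (d::real)" by simp
lemma aux_eq2: "a = b + c \<Longrightarrow> c = - d \<Longrightarrow> b = a + (d::real)" by simp

lemma exclusion_identity:
  fixes h :: "int \<Rightarrow> real" and p :: "'a \<Rightarrow> int"
  assumes inj: "inj_on p L" and fin: "finite L"
  shows "(\<Sum>i\<in>L. (if p i + 1 \<in> p ` L then 0 else h (p i + 1) - h (p i))
                 + (if p i - 1 \<in> p ` L then 0 else h (p i - 1) - h (p i)))
       = (\<Sum>i\<in>L. h (p i + 1) + h (p i - 1) - 2 * h (p i))" (is "?l = ?r")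
proof -
  define \<phi> where "\<phi> x = h (x+1) - h x" for x
  have e1: "(\<Sum>i\<in>L. (if p i + 1 \<in> p ` L then 0 else h (p i + 1) - h (p i)))
      = (\<Sum>i\<in>L. h (p i + 1) - h (p i)) - (\<Sum>i\<in>{i\<in>L. p i + 1 \<in> p ` L}. \<phi> (p i))"
  proof -
    have "(\<Sum>i\<in>L. h (p i + 1) - h (p i)) = (\<Sum>i\<in>L. (if p i + 1 \<in> p ` L then 0 else h (p i + 1) - h (p i)))
        + (\<Sum>i\<in>L. (if p i + 1 \<in> p ` L then h (p i + 1) - h (p i) else 0))"
      by (subst sum.distrib[symmetric]) (rule sum.cong, auto)
    moreover have "(\<Sum>i\<in>L. (if p i + 1 \<in> p ` L then h (p i + 1) - h (p i) else 0)) = (\<Sum>i\<in>{i\<in>L. p i + 1 \<in> p ` L}. \<phi> (p i))"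
      using fin by (simp add: sum.inter_filter[symmetric] \<phi>_def)
    ultimately show ?thesis by (rule aux_eq1)
  qed
  have e2: "(\<Sum>i\<in>L. (if p i - 1 \<in> p ` L then 0 else h (p i - 1) - h (p i)))
      = (\<Sum>i\<in>L. h (p i - 1) - h (p i)) + (\<Sum>i\<in>{i\<in>L. p i - 1 \<in> p ` L}. \<phi> (p i - 1))"
  proof -
    have "(\<Sum>i\<in>L. h (p i - 1) - h (p i)) = (\<Sum>i\<in>L. (if p i - 1 \<in> p ` L then 0 else h (p i - 1) - h (p i)))
        + (\<Sum>i\<in>L. (if p i - 1 \<in> p ` L then h (p i - 1) - h (p i) else 0))"
      by (subst sum.distrib[symmetric]) (rule sum.cong, auto)
    moreover have "(\<Sum>i\<in>L. (if p i - 1 \<in> p ` L then h (p i - 1) - h (p i) else 0)) = - (\<Sum>i\<in>{i\<in>L. p i - 1 \<in> p ` L}. \<phi> (p i - 1))"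
      using fin by (simp add: sum.inter_filter[symmetric] \<phi>_def sum_negf[symmetric])
    ultimately show ?thesis by (rule aux_eq2)
  qed
  have a1: "(\<Sum>i\<in>{i\<in>L. p i + 1 \<in> p ` L}. \<phi> (p i)) = (\<Sum>x\<in>{x\<in>p ` L. x + 1 \<in> p ` L}. \<phi> x)"
    using sum_img[OF inj fin, where P="\<lambda>x. x + 1 \<in> p ` L" and \<psi>=\<phi>] by simp
  have a2: "(\<Sum>i\<in>{i\<in>L. p i - 1 \<in> p ` L}. \<phi> (p i - 1)) = (\<Sum>x\<in>{x\<in>p ` L. x - 1 \<in> p ` L}. \<phi> (x - 1))"
    using sum_img[OF inj fin, where P="\<lambda>x. x - 1 \<in> p ` L" and \<psi>="\<lambda>x. \<phi> (x - 1)"] by simp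
  have a3: "(\<Sum>x\<in>{x\<in>p ` L. x - 1 \<in> p ` L}. \<phi> (x - 1)) = (\<Sum>x\<in>{x\<in>p ` L. x + 1 \<in> p ` L}. \<phi> x)"
  proof -
    have "{x\<in>p ` L. x + 1 \<in> p ` L} = (\<lambda>x. x - 1) ` {x\<in>p ` L. x - 1 \<in> p ` L}"
      by (auto simp: image_iff) (metis add_diff_cancel_right' diff_add_cancel)+
    moreover have "inj_on (\<lambda>x::int. x - 1) A" for A by (auto simp: inj_on_def)
    ultimately show ?thesis by (simp add: sum.reindex)
  qed
  have "?l = (\<Sum>i\<in>L. h (p i + 1) - h (p i)) + (\<Sum>i\<in>L. h (p i - 1) - h (p i))"
    by (simp add: sum.distrib e1 e2 a1 a2 a3)
  also have "\<dots> = ?r" by (simp add: sum.distrib[symmetric])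
  finally show ?thesis .
qed

lemma Lin_tj:
  assumes "i \<in> labels N"
  shows "Lin N h (try_jump N s i d) = Lin N h s +
     (if fst s i + d \<in> fst s ` labels N then 0 else h (fst s i + d) - h (fst s i))"
  using sum_upd[OF finite_labels assms, of h "fst s" "fst s i + d"]
  by (auto simp: try_jump_def Let_def Lin_def occupied_def)

lemma Lin_Pr: "Lin N (Pr N h) s = Lin N h s + rr N * (\<Sum>i\<in>labels N. h (fst s i + 1) + h (fst s i - 1) - 2 * h (fst s i))"
  unfolding Lin_def Pr_def by (simp add: sum.distrib sum_distrib_left)

lemma rr_pos: "rr N > 0" by (simp add: rr_def)
lemma rr_le: "rr N \<le> 1/2" by (simp add: rr_def)
lemma rr_inv: "1 / rr N = 2 * (2 * real N + 1)" by (simp add: rr_def)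

lemma m1: "x + -1 = x - (1::int)" by simp

lemma step_real:
  assumes I: "Inv N s" and G: "\<forall>x. \<bar>h (x+1) - h x\<bar> \<le> G"
  shows "rr N * (\<Sum>i\<in>labels N. exp (\<theta> * Lin N h (try_jump N s i (-1))) + exp (\<theta> * Lin N h (try_jump N s i 1)))
     \<le> exp (\<theta> * Lin N (Pr N h) s + \<theta>^2 * exp (\<bar>\<theta>\<bar> * G) / 2 * Qs N h s)"
proof -
  define p where "p = fst s"
  define L where "L = labels N"
  define Y where "Y i d = (if p i + d \<in> p ` L then 0 else h (p i + d) - h (p i))" for i d
  define E where "E = exp (\<bar>\<theta>\<bar> * G)"
  define Z where "Z = Lin N h s"
  have inj: "inj_on p L" using Inv_inj[OF I] by (simp add: p_def L_def)
  have fin: "finite L" by (simp add: L_def)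
  have G': "\<bar>h (x - 1) - h x\<bar> \<le> G" for x using G[rule_format, of "x - 1"] by simp
  have Yb: "\<bar>\<theta> * Y i d\<bar> \<le> \<bar>\<theta>\<bar> * G" if "d \<in> {-1,1}" for i d
  proof -
    have "\<bar>Y i d\<bar> \<le> G" using that G G' by (auto simp: Y_def)
    then show ?thesis by (simp add: abs_mult mult_left_mono)
  qed
  have Y2: "(Y i d)^2 \<le> (h (p i + d) - h (p i))^2" for i d by (simp add: Y_def)
  have one: "exp (\<theta> * Lin N h (try_jump N s i d)) \<le> exp (\<theta> * Z) * (1 + \<theta> * Y i d + \<theta>^2 * E / 2 * (h (p i + d) - h (p i))^2)"
    if "i \<in> L" "d \<in> {-1,1}" for i d
  proof -
    have "Lin N h (try_jump N s i d) = Z + Y i d"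
      using Lin_tj[of i N h s d] that by (simp add: Y_def p_def L_def Z_def)
    then have "exp (\<theta> * Lin N h (try_jump N s i d)) = exp (\<theta> * Z) * exp (\<theta> * Y i d)"
      by (simp add: distrib_left exp_add)
    also have "\<dots> \<le> exp (\<theta> * Z) * (1 + \<theta> * Y i d + (\<theta> * Y i d)^2 * E / 2)"
      by (rule mult_left_mono) (use exp_quad_bound[OF Yb[OF that(2)]] in \<open>auto simp: E_def\<close>)
    also have "\<dots> \<le> exp (\<theta> * Z) * (1 + \<theta> * Y i d + \<theta>^2 * E / 2 * (h (p i + d) - h (p i))^2)"
    proof -
      have "(\<theta> * Y i d)^2 * E / 2 = \<theta>^2 * E / 2 * (Y i d)^2" by (simp add: power_mult_distrib)
      also have "\<dots> \<le> \<theta>^2 * E / 2 * (h (p i + d) - h (p i))^2"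
        by (rule mult_left_mono[OF Y2]) (simp add: E_def)
      finally show ?thesis by (intro mult_left_mono) auto
    qed
    finally show ?thesis .
  qed
  have "(\<Sum>i\<in>L. exp (\<theta> * Lin N h (try_jump N s i (-1))) + exp (\<theta> * Lin N h (try_jump N s i 1)))
     \<le> (\<Sum>i\<in>L. exp (\<theta> * Z) * (1 + \<theta> * Y i (-1) + \<theta>^2 * E / 2 * (h (p i + -1) - h (p i))^2)
             + exp (\<theta> * Z) * (1 + \<theta> * Y i 1 + \<theta>^2 * E / 2 * (h (p i + 1) - h (p i))^2))"
    by (rule sum_mono) (intro add_mono one, auto)
  also have "\<dots> = exp (\<theta> * Z) * (2 * real (card L) + \<theta> * (\<Sum>i\<in>L. Y i 1 + Y i (-1))
        + \<theta>^2 * E / 2 * (\<Sum>i\<in>L. (h (p i + 1) - h (p i))^2 + (h (p i - 1) - h (p i))^2))"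
    by (simp add: sum.distrib sum_distrib_left algebra_simps)
  also have "(\<Sum>i\<in>L. Y i 1 + Y i (-1)) = (\<Sum>i\<in>L. h (p i + 1) + h (p i - 1) - 2 * h (p i))"
    using exclusion_identity[OF inj fin, of h] by (simp add: Y_def cong: if_cong)
  finally have S: "(\<Sum>i\<in>L. exp (\<theta> * Lin N h (try_jump N s i (-1))) + exp (\<theta> * Lin N h (try_jump N s i 1)))
    \<le> exp (\<theta> * Z) * (2 * real (card L) + \<theta> * (\<Sum>i\<in>L. h (p i + 1) + h (p i - 1) - 2 * h (p i))
        + \<theta>^2 * E / 2 * (\<Sum>i\<in>L. (h (p i + 1) - h (p i))^2 + (h (p i - 1) - h (p i))^2))" .
  have cardL: "2 * real (card L) * rr N = 1" by (simp add: L_def card_labels rr_def)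
  have "rr N * (\<Sum>i\<in>L. exp (\<theta> * Lin N h (try_jump N s i (-1))) + exp (\<theta> * Lin N h (try_jump N s i 1)))
     \<le> rr N * (exp (\<theta> * Z) * (2 * real (card L) + \<theta> * (\<Sum>i\<in>L. h (p i + 1) + h (p i - 1) - 2 * h (p i))
        + \<theta>^2 * E / 2 * (\<Sum>i\<in>L. (h (p i + 1) - h (p i))^2 + (h (p i - 1) - h (p i))^2)))"
    by (rule mult_left_mono[OF S]) (simp add: less_imp_le rr_pos)
  also have "\<dots> = exp (\<theta> * Z) * (1 + \<theta> * (Lin N (Pr N h) s - Z) + \<theta>^2 * E / 2 * Qs N h s)"
    using cardL by (simp add: Lin_Pr Qs_def Z_def p_def L_def algebra_simps)
  also have "\<dots> \<le> exp (\<theta> * Z) * exp (\<theta> * (Lin N (Pr N h) s - Z) + \<theta>^2 * E / 2 * Qs N h s)"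
    by (rule mult_left_mono) (simp_all add: add.assoc)
  also have "\<dots> = exp (\<theta> * Lin N (Pr N h) s + \<theta>^2 * E / 2 * Qs N h s)"
    by (simp add: exp_add[symmetric] algebra_simps)
  finally show ?thesis by (simp add: L_def E_def)
qed

lemma ennreal_half: "0 \<le> x \<Longrightarrow> ennreal x / 2 = ennreal (x/2)"
  by (metis divide_ennreal ennreal_numeral zero_less_numeral)

lemma kernel_nn:
  assumes f: "\<And>x. f x \<ge> 0"
  shows "(\<integral>\<^sup>+s'. ennreal (f s') \<partial>kernel N s)
     = ennreal (rr N * (\<Sum>i\<in>labels N. f (try_jump N s i (-1)) + f (try_jump N s i 1)))"
proof -
  have d: "(\<integral>\<^sup>+d. ennreal (f (try_jump N s i d)) \<partial>pmf_of_set {-1, 1::int})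
      = ennreal ((f (try_jump N s i (-1)) + f (try_jump N s i 1)) / 2)" for i
    by (subst nn_integral_pmf_of_set) (auto simp: f ennreal_half ennreal_plus[symmetric] simp del: ennreal_plus)
  have "(\<integral>\<^sup>+s'. ennreal (f s') \<partial>kernel N s)
     = (\<integral>\<^sup>+i. ennreal ((f (try_jump N s i (-1)) + f (try_jump N s i 1)) / 2) \<partial>pmf_of_set (labels N))"
    unfolding kernel_def by (simp add: d f)
  also have "\<dots> = ennreal ((\<Sum>i\<in>labels N. (f (try_jump N s i (-1)) + f (try_jump N s i 1)) / 2) / real (card (labels N)))"
    by (subst nn_integral_pmf_of_set) (auto simp: f sum_nonneg add_nonneg_nonneg divide_ennreal card_labels
       ennreal_of_nat_eq_real_of_nat simp del: of_nat_add of_nat_Suc)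
  also have "(\<Sum>i\<in>labels N. (f (try_jump N s i (-1)) + f (try_jump N s i 1)) / 2) / real (card (labels N))
     = rr N * (\<Sum>i\<in>labels N. f (try_jump N s i (-1)) + f (try_jump N s i 1))"
    by (simp add: card_labels rr_def sum_divide_distrib[symmetric])
  finally show ?thesis .
qed

lemma Inv_init: "Inv N init_state"
proof -
  have "cnt N init_state = int N + 1"
  proof -
    have "cnt N init_state = int (card (labels N \<inter> {i. 0 \<le> i}))"
      unfolding cnt_def init_state_def by (simp add: sum.If_cases)
    also have "labels N \<inter> {i. 0 \<le> i} = {0..int N}" by (auto simp: labels_def)
    finally show ?thesis by simp
  qed
  then show ?thesis by (simp add: Inv_def init_state_def)
qed

lemma set_kernel: "set_pmf (kernel N s) = {try_jump N s i d | i d. i \<in> labels N \<and> d \<in> {-1,1}}"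
  unfolding kernel_def by (auto simp: set_bind_pmf)

lemma iter_Suc: "iter_law N (Suc n) = iter_law N n \<bind> kernel N"
  by (simp add: iter_law_def)

lemma iter_0: "iter_law N 0 = return_pmf init_state"
  by (simp add: iter_law_def)

lemma Inv_iter: "s \<in> set_pmf (iter_law N n) \<Longrightarrow> Inv N s"
proof (induction n arbitrary: s)
  case 0 then show ?case by (simp add: iter_0 Inv_init)
next
  case (Suc n)
  then obtain s0 where s0: "s0 \<in> set_pmf (iter_law N n)" "s \<in> set_pmf (kernel N s0)"
    by (auto simp: iter_Suc set_bind_pmf)
  then show ?case using Suc.IH[OF s0(1)] by (auto simp: set_kernel intro: Inv_try_jump)
qed

lemma iter_bound:
  assumes hk: "\<forall>k<n. hs k = Pr N (hs (Suc k))"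
    and Q: "\<forall>k<n. \<forall>s. Inv N s \<longrightarrow> Qs N (hs (Suc k)) s \<le> W k"
    and G: "\<forall>k<n. \<forall>x. \<bar>hs (Suc k) (x+1) - hs (Suc k) x\<bar> \<le> G"
  shows "k \<le> n \<Longrightarrow> (\<integral>\<^sup>+s. ennreal (exp (\<theta> * Lin N (hs k) s)) \<partial>iter_law N k)
     \<le> ennreal (exp (\<theta> * Lin N (hs 0) init_state + \<theta>^2 * exp (\<bar>\<theta>\<bar> * G) / 2 * (\<Sum>j<k. W j)))"
proof (induction k)
  case 0 then show ?case by (simp add: iter_0)
next
  case (Suc k)
  define E where "E = \<theta>^2 * exp (\<bar>\<theta>\<bar> * G) / 2"
  have E0: "E \<ge> 0" by (simp add: E_def)
  have kn: "k < n" using Suc.prems by simp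
  have inner: "(\<integral>\<^sup>+s'. ennreal (exp (\<theta> * Lin N (hs (Suc k)) s')) \<partial>kernel N s)
      \<le> ennreal (exp (\<theta> * Lin N (hs k) s)) * ennreal (exp (E * W k))" if "s \<in> set_pmf (iter_law N k)" for s
  proof -
    have I: "Inv N s" using Inv_iter[OF that] .
    have "(\<integral>\<^sup>+s'. ennreal (exp (\<theta> * Lin N (hs (Suc k)) s')) \<partial>kernel N s)
       = ennreal (rr N * (\<Sum>i\<in>labels N. exp (\<theta> * Lin N (hs (Suc k)) (try_jump N s i (-1))) + exp (\<theta> * Lin N (hs (Suc k)) (try_jump N s i 1))))"
      by (rule kernel_nn) simp
    also have "\<dots> \<le> ennreal (exp (\<theta> * Lin N (Pr N (hs (Suc k))) s + E * Qs N (hs (Suc k)) s))"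
      using step_real[OF I, of "hs (Suc k)" G \<theta>] G kn by (simp add: E_def)
    also have "\<dots> \<le> ennreal (exp (\<theta> * Lin N (hs k) s + E * W k))"
    proof -
      have "Qs N (hs (Suc k)) s \<le> W k" using Q kn I by blast
      then show ?thesis using hk kn E0 by (auto intro!: ennreal_leI mult_left_mono)
    qed
    also have "\<dots> = ennreal (exp (\<theta> * Lin N (hs k) s)) * ennreal (exp (E * W k))"
      by (simp add: exp_add ennreal_mult)
    finally show ?thesis .
  qed
  have "(\<integral>\<^sup>+s. ennreal (exp (\<theta> * Lin N (hs (Suc k)) s)) \<partial>iter_law N (Suc k))
     = (\<integral>\<^sup>+s. (\<integral>\<^sup>+s'. ennreal (exp (\<theta> * Lin N (hs (Suc k)) s')) \<partial>kernel N s) \<partial>iter_law N k)"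
    by (simp add: iter_Suc)
  also have "\<dots> \<le> (\<integral>\<^sup>+s. ennreal (exp (\<theta> * Lin N (hs k) s)) * ennreal (exp (E * W k)) \<partial>iter_law N k)"
    by (rule nn_integral_mono_AE) (simp add: AE_measure_pmf_iff inner)
  also have "\<dots> = (\<integral>\<^sup>+s. ennreal (exp (\<theta> * Lin N (hs k) s)) \<partial>iter_law N k) * ennreal (exp (E * W k))"
    by (rule nn_integral_multc) simp
  also have "\<dots> \<le> ennreal (exp (\<theta> * Lin N (hs 0) init_state + E * (\<Sum>j<k. W j))) * ennreal (exp (E * W k))"
    using Suc.IH Suc.prems by (auto simp: E_def intro: mult_right_mono)
  also have "\<dots> = ennreal (exp (\<theta> * Lin N (hs 0) init_state + E * (\<Sum>j<Suc k. W j)))"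
    by (simp add: ennreal_mult[symmetric] exp_add[symmetric] algebra_simps)
  finally show ?case by (simp add: E_def)
qed

lemma markov_exp:
  fixes p :: "'a pmf"
  assumes th: "\<theta> \<ge> 0" and B: "(\<integral>\<^sup>+s. ennreal (exp (\<theta> * F s)) \<partial>p) \<le> ennreal B"
    and A: "\<forall>s\<in>set_pmf p. s \<in> A \<longrightarrow> F s \<ge> b" and B0: "B \<ge> 0"
  shows "measure_pmf.prob p A \<le> exp (- \<theta> * b) * B"
proof -
  have "(\<integral>\<^sup>+s. ennreal (exp (\<theta> * b)) * indicator A s \<partial>p) \<le> (\<integral>\<^sup>+s. ennreal (exp (\<theta> * F s)) \<partial>p)"
  proof (rule nn_integral_mono_AE)
    show "AE s in measure_pmf p. ennreal (exp (\<theta> * b)) * indicator A s \<le> ennreal (exp (\<theta> * F s))"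
    proof (rule AE_pmfI)
      fix s assume "s \<in> set_pmf p"
      then have "s \<in> A \<Longrightarrow> \<theta> * b \<le> \<theta> * F s" using A th by (auto intro: mult_left_mono)
      then show "ennreal (exp (\<theta> * b)) * indicator A s \<le> ennreal (exp (\<theta> * F s))"
        by (auto simp: indicator_def)
    qed
  qed
  also have "\<dots> \<le> ennreal B" by (rule B)
  finally have "ennreal (exp (\<theta> * b)) * emeasure p A \<le> ennreal B"
    by (simp add: nn_integral_cmult_indicator)
  then have "ennreal (exp (\<theta> * b) * measure_pmf.prob p A) \<le> ennreal B"
    by (simp add: measure_pmf.emeasure_eq_measure ennreal_mult)
  moreover have "B \<ge> 0" by (rule B0)
  ultimately have "exp (\<theta> * b) * measure_pmf.prob p A \<le> B" by (simp add: ennreal_le_iff)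
  then have "measure_pmf.prob p A \<le> B / exp (\<theta> * b)" by (simp add: field_simps mult.commute)
  then show ?thesis by (simp add: exp_minus divide_inverse mult.commute)
qed



lemma sum_inj_le:
  fixes \<phi> :: "int \<Rightarrow> real"
  assumes "inj_on q L" "finite L" "finite S" "\<And>x. \<phi> x \<ge> 0" "\<And>x. x \<notin> S \<Longrightarrow> \<phi> x = 0"
  shows "(\<Sum>i\<in>L. \<phi> (q i)) \<le> (\<Sum>x\<in>S. \<phi> x)"
proof -
  have "(\<Sum>i\<in>L. \<phi> (q i)) = (\<Sum>x\<in>q ` L. \<phi> x)" using assms(1) by (simp add: sum.reindex)
  also have "\<dots> = (\<Sum>x\<in>q ` L \<inter> S. \<phi> x)"
    using assms by (intro sum.mono_neutral_right) auto
  also have "\<dots> \<le> (\<Sum>x\<in>S. \<phi> x)" using assms by (intro sum_mono2) auto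
  finally show ?thesis .
qed

lemma Qs_crude:
  assumes "\<forall>x. \<bar>h (x+1) - h x\<bar> \<le> G"
  shows "Qs N h s \<le> G^2"
proof -
  have b: "(h (x + 1) - h x)^2 \<le> G^2" for x
    using assms by (metis abs_le_square_iff abs_of_nonneg abs_ge_zero order_trans power2_abs)
  have b2: "(h (x - 1) - h x)^2 \<le> G^2" for x
    using b[of "x - 1"] by (simp add: power2_commute)
  have "(\<Sum>i\<in>labels N. (h (fst s i + 1) - h (fst s i))^2 + (h (fst s i - 1) - h (fst s i))^2)
      \<le> (\<Sum>i\<in>labels N. 2 * G^2)" by (rule sum_mono) (metis b b2 add_mono mult_2)
  also have "\<dots> = 2 * G^2 * (2 * real N + 1)" by (simp add: card_labels)
  finally show ?thesis unfolding Qs_def rr_def by (simp add: field_simps)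
qed

lemma Qs_supp:
  assumes I: "Inv N s" and S: "finite S" and z: "\<And>x. x \<notin> S \<Longrightarrow> h (x+1) = h x"
  shows "Qs N h s \<le> 2 * rr N * (\<Sum>x\<in>S. (h (x+1) - h x)^2)"
proof -
  define \<phi> where "\<phi> x = (h (x+1) - h x)^2" for x
  have inj: "inj_on (fst s) (labels N)" using Inv_inj[OF I] .
  have inj2: "inj_on (\<lambda>i. fst s i - 1) (labels N)" using inj by (auto simp: inj_on_def)
  have 1: "(\<Sum>i\<in>labels N. \<phi> (fst s i)) \<le> (\<Sum>x\<in>S. \<phi> x)"
    by (rule sum_inj_le[OF inj finite_labels S]) (auto simp: \<phi>_def z)
  have 2: "(\<Sum>i\<in>labels N. \<phi> (fst s i - 1)) \<le> (\<Sum>x\<in>S. \<phi> x)"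
    using sum_inj_le[OF inj2 finite_labels S, of \<phi>] by (auto simp: \<phi>_def z)
  have "(\<Sum>i\<in>labels N. (h (fst s i + 1) - h (fst s i))^2 + (h (fst s i - 1) - h (fst s i))^2)
     = (\<Sum>i\<in>labels N. \<phi> (fst s i)) + (\<Sum>i\<in>labels N. \<phi> (fst s i - 1))"
    by (simp add: \<phi>_def sum.distrib power2_commute)
  also have "\<dots> \<le> 2 * (\<Sum>x\<in>S. \<phi> x)" using 1 2 by simp
  finally show ?thesis unfolding Qs_def \<phi>_def using rr_pos[of N]
    by (simp add: mult.assoc mult_left_mono)
qed

definition g0 :: "int \<Rightarrow> real" where "g0 x = (if 0 \<le> x then 1 else 0)"
definition F :: "nat \<Rightarrow> nat \<Rightarrow> int \<Rightarrow> real" where "F N m = (Pr N ^^ m) g0"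
definition pp :: "nat \<Rightarrow> nat \<Rightarrow> int \<Rightarrow> real" where "pp N m z = F N m z - F N m (z - 1)"

lemma F_0: "F N 0 = g0" by (simp add: F_def)
lemma F_Suc: "F N (Suc m) = Pr N (F N m)" by (simp add: F_def)

lemma pp_Suc: "pp N (Suc m) = Pr N (pp N m)"
  by (rule ext) (simp add: pp_def F_Suc Pr_def algebra_simps)

lemma pp_0: "pp N 0 z = (if z = 0 then 1 else 0)"
  by (simp add: pp_def F_0 g0_def)

lemma Pr_nonneg: "(\<And>x. f x \<ge> 0) \<Longrightarrow> Pr N f x \<ge> 0"
proof -
  assume f: "\<And>x. f x \<ge> 0"
  have "Pr N f x = (1 - 2 * rr N) * f x + rr N * f (x+1) + rr N * f (x - 1)"
    by (simp add: Pr_def algebra_simps)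
  moreover have "1 - 2 * rr N \<ge> 0" using rr_le[of N] by simp
  ultimately show ?thesis using f rr_pos[of N] by (simp add: add_nonneg_nonneg)
qed

lemma Pr_le: "(\<And>x. f x \<le> c) \<Longrightarrow> Pr N f x \<le> c"
proof -
  assume f: "\<And>x. f x \<le> c"
  have "Pr N f x = (1 - 2 * rr N) * f x + rr N * f (x+1) + rr N * f (x - 1)"
    by (simp add: Pr_def algebra_simps)
  also have "\<dots> \<le> (1 - 2 * rr N) * c + rr N * c + rr N * c"
    using rr_le[of N] rr_pos[of N] f by (intro add_mono mult_left_mono) auto
  finally show ?thesis by (simp add: algebra_simps)
qed

lemma Pr_mono: "(\<And>x. f x \<le> g x) \<Longrightarrow> Pr N f x \<le> Pr N g x"
proof -
  assume "\<And>x. f x \<le> g x"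
  then have "Pr N (\<lambda>x. g x - f x) x \<ge> 0" by (intro Pr_nonneg) auto
  then show ?thesis by (simp add: Pr_def algebra_simps)
qed

lemma F_nonneg: "F N m x \<ge> 0"
  by (induction m arbitrary: x) (auto simp: F_0 F_Suc g0_def intro: Pr_nonneg)
lemma F_le1: "F N m x \<le> 1"
  by (induction m arbitrary: x) (auto simp: F_0 F_Suc g0_def intro: Pr_le)
lemma pp_nonneg: "pp N m x \<ge> 0"
  by (induction m arbitrary: x) (auto simp: pp_0 pp_Suc intro: Pr_nonneg)
lemma pp_le1: "pp N m x \<le> 1"
  by (induction m arbitrary: x) (auto simp: pp_0 pp_Suc intro: Pr_le)

lemma F_sym: "F N m x + F N m (-1 - x) = 1"
proof (induction m arbitrary: x)
  case 0 then show ?case by (simp add: F_0 g0_def)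
next
  case (Suc m)
  have a: "F N m (x+1) + F N m (-1 - x - 1) = 1" using Suc.IH[of "x+1"] by (simp add: algebra_simps)
  have b: "F N m (x - 1) + F N m (-1 - x + 1) = 1" using Suc.IH[of "x - 1"] by (simp add: algebra_simps)
  have "Pr N (F N m) x + Pr N (F N m) (-1 - x) = F N m x + F N m (-1 - x)
     + rr N * ((F N m (x+1) + F N m (-1 - x - 1)) + (F N m (x - 1) + F N m (-1 - x + 1)) - 2 * (F N m x + F N m (-1 - x)))"
    by (simp add: Pr_def algebra_simps)
  then show ?case using Suc.IH[of x] a b by (simp add: F_Suc)
qed

lemma F_sym': "F N m x + F N m (- x - 1) = 1"
proof -
  have e: "- x - 1 = -1 - x" by simp
  show ?thesis unfolding e by (rule F_sym)
qed

lemma pp_sym: "pp N m (-z) = pp N m z"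
  using F_sym'[of N m "z - 1"] F_sym'[of N m z] by (simp add: pp_def algebra_simps)

lemma pp_supp: "\<bar>z\<bar> > int m \<Longrightarrow> pp N m z = 0"
proof (induction m arbitrary: z)
  case 0 then show ?case by (simp add: pp_0)
next
  case (Suc m)
  then show ?case by (simp add: pp_Suc Pr_def)
qed

lemma F_grad: "F N m (x+1) - F N m x = pp N m (x+1)" by (simp add: pp_def)

lemma F_one: "x \<ge> int m \<Longrightarrow> F N m x = 1"
proof (induction m arbitrary: x)
  case 0 then show ?case by (simp add: F_0 g0_def)
next
  case (Suc m) then show ?case by (simp add: F_Suc Pr_def)
qed

lemma F_zero: "x < - int m \<Longrightarrow> F N m x = 0"
  using F_one[of m "-1 - x" N] F_sym[of N m x] by simp



lemma sum_supp_eq: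
  assumes "finite A" "finite B" "\<And>x. x \<in> A - B \<Longrightarrow> f x = 0" "\<And>x. x \<in> B - A \<Longrightarrow> f x = 0"
  shows "sum f A = (sum f B :: real)"
proof -
  have "sum f A = sum f (A \<union> B)" using assms by (intro sum.mono_neutral_left) auto
  also have "\<dots> = sum f B" using assms by (intro sum.mono_neutral_right) auto
  finally show ?thesis .
qed

lemma sum_shift_int: "(\<Sum>z\<in>{a..b}. f (z + c)) = (\<Sum>w\<in>{a+c..b+(c::int)}. (f w :: real))"
  by (rule sum.reindex_bij_witness[of _ "\<lambda>w. w - c" "\<lambda>z. z + c"]) auto

lemma shift_p1:
  fixes f :: "int \<Rightarrow> real"
  assumes "\<And>w. \<bar>w\<bar> \<ge> K \<Longrightarrow> f w = 0"
  shows "(\<Sum>z\<in>{-K..K}. f (z + 1)) = (\<Sum>z\<in>{-K..K}. f z)"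
  unfolding sum_shift_int by (rule sum_supp_eq) (auto intro!: assms)

lemma shift_m1:
  fixes f :: "int \<Rightarrow> real"
  assumes "\<And>w. \<bar>w\<bar> \<ge> K \<Longrightarrow> f w = 0"
  shows "(\<Sum>z\<in>{-K..K}. f (z - 1)) = (\<Sum>z\<in>{-K..K}. f z)"
proof -
  have "(\<Sum>z\<in>{-K..K}. f (z - 1)) = (\<Sum>w\<in>{-K + -1..K + -1}. f w)"
    using sum_shift_int[where f=f and a="-K" and b=K and c="-1"] by simp
  also have "\<dots> = (\<Sum>z\<in>{-K..K}. f z)" by (rule sum_supp_eq) (auto intro!: assms)
  finally show ?thesis .
qed

lemma telescope_int:
  fixes f :: "int \<Rightarrow> real"
  shows "a \<le> b + 1 \<Longrightarrow> (\<Sum>y\<in>{a..b}. f y - f (y+1)) = f a - f (b+1)"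
proof (induction "nat (b + 1 - a)" arbitrary: b)
  case 0
  then have "b = a - 1" by simp
  then show ?case by simp
next
  case (Suc n)
  then have ab: "a \<le> b" by simp
  have "{a..b} = insert b {a..b-1}" using ab by auto
  then have "(\<Sum>y\<in>{a..b}. f y - f (y+1)) = (f b - f (b+1)) + (\<Sum>y\<in>{a..b-1}. f y - f (y+1))"
    by simp
  also have "(\<Sum>y\<in>{a..b-1}. f y - f (y+1)) = f a - f b"
    using Suc.hyps(1)[of "b - 1"] Suc.hyps(2) ab by simp
  finally show ?case by simp
qed

lemma energy_step:
  fixes p :: "int \<Rightarrow> real" and K :: int
  assumes supp: "\<And>z. \<bar>z\<bar> \<ge> K - 1 \<Longrightarrow> p z = 0" and r: "0 \<le> r" "r \<le> 1/4"
  shows "(\<Sum>z\<in>{-K..K}. (p z + r * (p (z+1) + p (z-1) - 2 * p z))^2)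
      \<le> (\<Sum>z\<in>{-K..K}. (p z)^2) - r * (\<Sum>z\<in>{-K..K}. (p (z+1) - p z)^2)"
proof -
  define D where "D z = p (z+1) - p z" for z
  let ?S = "\<lambda>f. (\<Sum>z\<in>{-K..K}. f z)"
  have s1: "?S (\<lambda>z. p (z+1)^2) = ?S (\<lambda>z. p z^2)"
    by (rule shift_p1[where f="\<lambda>z. p z^2"]) (simp add: supp)
  have s2: "?S (\<lambda>z. p z * p (z-1)) = ?S (\<lambda>z. p (z+1) * p z)"
    using shift_p1[where f="\<lambda>z. p z * p (z-1)" and K=K] by (simp add: supp)
  have s3: "?S (\<lambda>z. D (z-1)^2) = ?S (\<lambda>z. D z^2)"
    by (rule shift_m1[where f="\<lambda>z. D z^2"]) (simp add: D_def supp)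
  have eq: "p z + r * (p (z+1) + p (z-1) - 2 * p z) = p z + r * (D z - D (z-1))" for z
    by (simp add: D_def)
  have sq: "(p z + r * (D z - D (z-1)))^2 = p z^2 + 2 * r * (p z * p (z+1) + p z * p (z - 1) - 2 * p z^2)
          + r^2 * (D z - D (z-1))^2" for z
    by (simp add: D_def power2_eq_square algebra_simps)
  have dd: "(D z - D (z-1))^2 \<le> 2 * D z^2 + 2 * D (z-1)^2" for z
  proof -
    have "0 \<le> (D z + D (z-1))^2" by simp
    then show ?thesis by (simp add: power2_eq_square algebra_simps)
  qed
  have eD: "?S (\<lambda>z. D z^2) = 2 * ?S (\<lambda>z. p z^2) - 2 * ?S (\<lambda>z. p (z+1) * p z)"
  proof -
    have "?S (\<lambda>z. D z^2) = ?S (\<lambda>z. p (z+1)^2) - 2 * ?S (\<lambda>z. p (z+1) * p z) + ?S (\<lambda>z. p z^2)"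
      by (simp add: D_def power2_eq_square algebra_simps sum.distrib sum_subtractf sum_distrib_left)
    then show ?thesis using s1 by simp
  qed
  have A1: "?S (\<lambda>z. (p z + r * (p (z+1) + p (z-1) - 2 * p z))^2)
     = ?S (\<lambda>z. p z^2) + 2 * r * (?S (\<lambda>z. p z * p (z+1)) + ?S (\<lambda>z. p z * p (z - 1)) - 2 * ?S (\<lambda>z. p z^2))
       + r^2 * ?S (\<lambda>z. (D z - D (z-1))^2)"
    by (simp add: eq sq sum.distrib sum_subtractf sum_distrib_left[symmetric])
  have A2: "?S (\<lambda>z. (D z - D (z-1))^2) \<le> 4 * ?S (\<lambda>z. D z^2)"
  proof -
    have "?S (\<lambda>z. (D z - D (z-1))^2) \<le> ?S (\<lambda>z. 2 * D z^2 + 2 * D (z-1)^2)"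
      by (rule sum_mono) (rule dd)
    also have "\<dots> = 4 * ?S (\<lambda>z. D z^2)" using s3 by (simp add: sum.distrib sum_distrib_left[symmetric])
    finally show ?thesis .
  qed
  have A3: "r^2 * ?S (\<lambda>z. (D z - D (z-1))^2) \<le> r^2 * (4 * ?S (\<lambda>z. D z^2))"
    by (rule mult_left_mono[OF A2]) simp
  have "?S (\<lambda>z. (p z + r * (p (z+1) + p (z-1) - 2 * p z))^2)
     \<le> ?S (\<lambda>z. p z^2) + 2 * r * (?S (\<lambda>z. p z * p (z+1)) + ?S (\<lambda>z. p z * p (z - 1)) - 2 * ?S (\<lambda>z. p z^2))
       + r^2 * (4 * ?S (\<lambda>z. D z^2))" using A1 A3 by linarith
  also have "\<dots> = ?S (\<lambda>z. p z^2) - (2 * r - 4 * r^2) * ?S (\<lambda>z. D z^2)"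
  proof -
    have c: "?S (\<lambda>z. p z * p (z+1)) = ?S (\<lambda>z. p (z+1) * p z)" by (simp add: mult.commute)
    show ?thesis unfolding c s2 eD by (simp add: algebra_simps)
  qed
  also have "\<dots> \<le> ?S (\<lambda>z. p z^2) - r * ?S (\<lambda>z. D z^2)"
  proof -
    have "?S (\<lambda>z. D z^2) \<ge> 0" by (simp add: sum_nonneg)
    moreover have "2 * r - 4 * r^2 \<ge> r" using r by (simp add: power2_eq_square) (metis mult.commute mult.left_commute mult_left_mono mult_1_right)
    ultimately show ?thesis by (simp add: mult_right_mono)
  qed
  finally show ?thesis by (simp add: D_def)
qed



lemma amgm: "(\<epsilon>::real) > 0 \<Longrightarrow> x * y \<le> \<epsilon> * x^2 + y^2 / (4 * \<epsilon>)"
proof -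
  assume e: "\<epsilon> > 0"
  have "0 \<le> (2 * \<epsilon> * x - y)^2 / (4 * \<epsilon>)" using e by simp
  also have "(2 * \<epsilon> * x - y)^2 / (4 * \<epsilon>) = \<epsilon> * x^2 + y^2 / (4 * \<epsilon>) - x * y"
    using e by (simp add: field_simps power2_eq_square)
  finally show ?thesis by simp
qed

lemma term_bound:
  fixes a b \<epsilon> :: real assumes "\<epsilon> > 0"
  shows "a^2 - b^2 \<le> \<epsilon> * (b - a)^2 + (a^2 + b^2) / (2 * \<epsilon>)"
proof -
  have "a^2 - b^2 = (a - b) * (a + b)" by (simp add: power2_eq_square algebra_simps)
  also have "\<dots> \<le> \<epsilon> * (a - b)^2 + (a + b)^2 / (4 * \<epsilon>)" by (rule amgm[OF assms])
  also have "(a + b)^2 / (4 * \<epsilon>) \<le> (a^2 + b^2) / (2 * \<epsilon>)"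
  proof -
    have "(a + b)^2 \<le> 2 * (a^2 + b^2)"
    proof -
      have "0 \<le> (a - b)^2" by simp
      then show ?thesis by (simp add: power2_eq_square algebra_simps)
    qed
    then show ?thesis using assms by (simp add: field_simps)
  qed
  finally show ?thesis by (simp add: power2_commute)
qed

lemma nash:
  fixes p :: "int \<Rightarrow> real" and K :: int
  assumes supp: "\<And>z. \<bar>z\<bar> \<ge> K - 1 \<Longrightarrow> p z = 0" and nn: "\<And>z. p z \<ge> 0"
    and mass: "(\<Sum>z\<in>{-K..K}. p z) = 1"
  shows "(\<Sum>z\<in>{-K..K}. (p z)^2)^3 \<le> 4 * (\<Sum>z\<in>{-K..K}. (p (z+1) - p z)^2)"
proof -
  define I where "I = {-K..K}"
  define u where "u = (\<Sum>z\<in>I. (p z)^2)"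
  define E where "E = (\<Sum>z\<in>I. (p (z+1) - p z)^2)"
  have finI: "finite I" by (simp add: I_def)
  have Ine: "I \<noteq> {}"
  proof
    assume "I = {}"
    then have "(\<Sum>z\<in>{-K..K}. p z) = 0" by (simp add: I_def)
    then show False using mass by simp
  qed
  define M where "M = Max (p ` I)"
  have M_in: "M \<in> p ` I" unfolding M_def using finI Ine by (intro Max_in) auto
  then obtain z0 where z0: "z0 \<in> I" "p z0 = M" by auto
  have Mge: "p z \<le> M" if "z \<in> I" for z unfolding M_def using finI that by (intro Max_ge) auto
  have uM: "u \<le> M"
  proof -
    have "u = (\<Sum>z\<in>I. p z * p z)" by (simp add: u_def power2_eq_square)
    also have "\<dots> \<le> (\<Sum>z\<in>I. M * p z)" by (rule sum_mono) (simp add: Mge mult_right_mono nn)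
    also have "\<dots> = M" using mass by (simp add: sum_distrib_left[symmetric] I_def)
    finally show ?thesis .
  qed
  have upos: "u > 0"
  proof (rule ccontr)
    assume "\<not> u > 0"
    then have "u = 0" using sum_nonneg[of I "\<lambda>z. (p z)^2"] by (simp add: u_def)
    then have "\<forall>z\<in>I. (p z)^2 = 0" using finI by (simp add: u_def sum_nonneg_eq_0_iff)
    then have "(\<Sum>z\<in>I. p z) = 0" by simp
    then show False using mass by (simp add: I_def)
  qed
  have tel: "(p z0)^2 = (\<Sum>y\<in>{z0..K}. (p y)^2 - (p (y+1))^2)"
  proof -
    have "z0 \<le> K + 1" using z0 by (simp add: I_def)
    then have "(\<Sum>y\<in>{z0..K}. (p y)^2 - (p (y+1))^2) = (p z0)^2 - (p (K+1))^2"
      using telescope_int[of z0 K "\<lambda>y. (p y)^2"] by simp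
    moreover have "p (K+1) = 0" by (rule supp) simp
    ultimately show ?thesis by simp
  qed
  have key: "M^2 \<le> \<epsilon> * E + u / \<epsilon>" if e: "\<epsilon> > 0" for \<epsilon>
  proof -
    define T where "T y = \<epsilon> * (p (y+1) - p y)^2 + ((p y)^2 + (p (y+1))^2) / (2 * \<epsilon>)" for y
    have T0: "T y \<ge> 0" for y using e by (simp add: T_def)
    have "M^2 = (\<Sum>y\<in>{z0..K}. (p y)^2 - (p (y+1))^2)" using tel z0 by simp
    also have "\<dots> \<le> (\<Sum>y\<in>{z0..K}. T y)" unfolding T_def by (rule sum_mono) (rule term_bound[OF e])
    also have "\<dots> \<le> (\<Sum>y\<in>I. T y)" using z0 T0 by (intro sum_mono2) (auto simp: I_def)
    also have "(\<Sum>y\<in>I. T y) = \<epsilon> * E + (u + (\<Sum>y\<in>I. (p (y+1))^2)) / (2 * \<epsilon>)"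
      by (simp add: T_def E_def u_def sum.distrib sum_distrib_left sum_divide_distrib add_divide_distrib)
    also have "(\<Sum>y\<in>I. (p (y+1))^2) = u"
      unfolding u_def I_def by (rule shift_p1[where f="\<lambda>z. (p z)^2"]) (simp add: supp)
    finally show ?thesis using e by (simp add: field_simps)
  qed
  have "u^2 \<le> M^2" using uM upos by (simp add: power_mono)
  also have "M^2 \<le> (2 / u) * E + u / (2 / u)" using key[of "2/u"] upos by simp
  finally have "u^2 \<le> 2 * E / u + u^2 / 2" by (simp add: power2_eq_square)
  then have "u^2 / 2 \<le> 2 * E / u" by simp
  then have "u^2 / 2 * u \<le> 2 * E" using upos by (simp add: field_simps)
  then have "u^3 \<le> 4 * E" by (simp add: power3_eq_cube power2_eq_square)
  then show ?thesis by (simp add: u_def E_def I_def)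
qed

lemma u_rec:
  fixes v v' r :: real
  assumes "0 < v'" "v' \<le> v - r * v^3 / 4" "0 < v" "v \<le> 1" "0 \<le> r" "r \<le> 1/4"
  shows "1 / v'^2 \<ge> 1 / v^2 + r / 2"
proof -
  define s where "s = r * v^2 / 4"
  have s0: "0 \<le> s" using assms by (simp add: s_def)
  have s1: "s \<le> 1/16"
  proof -
    have "v^2 \<le> 1" using assms by (simp add: power_le_one)
    then have "r * v^2 \<le> 1/4 * 1" using assms by (intro mult_mono) auto
    then show ?thesis by (simp add: s_def)
  qed
  have "v' \<le> v * (1 - s)" using assms(2) by (simp add: s_def power3_eq_cube power2_eq_square algebra_simps)
  then have "v'^2 \<le> (v * (1 - s))^2" using assms(1) by (intro power_mono) auto
  then have "1 / (v * (1 - s))^2 \<le> 1 / v'^2" using assms(1,3) s1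
    by (intro divide_left_mono) (auto simp: mult_pos_pos)
  moreover have "1 / v^2 + r / 2 \<le> 1 / (v * (1 - s))^2"
  proof -
    have poly: "(1 - s)^2 * (1 + 2 * s) \<le> 1"
    proof -
      have "(1 - s)^2 * (1 + 2 * s) = 1 - s^2 * (3 - 2 * s)" by (simp add: power2_eq_square algebra_simps)
      moreover have "s^2 * (3 - 2 * s) \<ge> 0" using s0 s1 by simp
      ultimately show ?thesis by simp
    qed
    have "1 / v^2 + r / 2 = (1 + 2 * s) / v^2" using assms(3) by (simp add: s_def field_simps)
    also have "\<dots> \<le> 1 / (v * (1 - s))^2"
    proof -
      have W0: "0 < (v * (1 - s))^2" using assms(3) s1 by simp
      have "(1 + 2 * s) * (v * (1 - s))^2 = v^2 * ((1 - s)^2 * (1 + 2 * s))"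
        by (simp add: power_mult_distrib)
      also have "\<dots> \<le> v^2 * 1" by (rule mult_left_mono[OF poly]) simp
      finally have X: "(1 + 2 * s) * (v * (1 - s))^2 \<le> v^2" by simp
      show ?thesis using W0 X assms(3) by (simp add: field_simps)
    qed
    finally show ?thesis .
  qed
  ultimately show ?thesis by simp
qed

lemma pp_mass: "K \<ge> int m \<Longrightarrow> (\<Sum>z\<in>{-K..K}. pp N m z) = 1"
proof -
  assume K: "K \<ge> int m"
  have "(\<Sum>z\<in>{-K..K}. pp N m z) = (\<Sum>z\<in>{-K..K}. (- F N m (z - 1)) - (- F N m (z + 1 - 1)))"
    by (simp add: pp_def)
  also have "\<dots> = - F N m (-K - 1) - (- F N m (K + 1 - 1))"
    using telescope_int[of "-K" K "\<lambda>y. - F N m (y - 1)"] K by simp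
  also have "\<dots> = 1" using F_one[of m K N] F_zero[of "-K-1" m N] K by simp
  finally show ?thesis .
qed

definition u :: "nat \<Rightarrow> nat \<Rightarrow> real" where
  "u N m = (\<Sum>z\<in>{-(int m + 2)..int m + 2}. (pp N m z)^2)"

lemma u_any: "K \<ge> int m \<Longrightarrow> (\<Sum>z\<in>{-K..K}. (pp N m z)^2) = u N m"
  unfolding u_def by (rule sum_supp_eq) (auto intro!: pp_supp)

lemma u_0: "u N 0 = 1"
proof -
  have "u N 0 = (\<Sum>z\<in>{-2..2::int}. (if z = 0 then 1 else 0))" unfolding u_def
    by (rule sum.cong) (auto simp: pp_0)
  also have "\<dots> = 1" by (simp add: sum.delta)
  finally show ?thesis .
qed

lemma u_le1: "u N m \<le> 1"
proof -
  have "u N m \<le> (\<Sum>z\<in>{-(int m + 2)..int m + 2}. pp N m z)"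
    unfolding u_def by (rule sum_mono) (simp add: power2_eq_square mult_le_cancel_right1 pp_le1 pp_nonneg
      mult_right_le_one_le)
  also have "\<dots> = 1" by (rule pp_mass) simp
  finally show ?thesis .
qed

lemma u_pos: "u N m > 0"
proof (rule ccontr)
  assume "\<not> u N m > 0"
  then have "u N m = 0" using sum_nonneg[of "{-(int m + 2)..int m + 2}" "\<lambda>z. (pp N m z)^2"] by (simp add: u_def)
  then have "\<forall>z\<in>{-(int m + 2)..int m + 2}. (pp N m z)^2 = 0" by (simp add: u_def sum_nonneg_eq_0_iff)
  then have "(\<Sum>z\<in>{-(int m + 2)..int m + 2}. pp N m z) = 0" by simp
  then show False using pp_mass[of m "int m + 2" N] by simp
qed

lemma rr_le4: "N \<ge> 1 \<Longrightarrow> rr N \<le> 1/4" by (simp add: rr_def field_simps)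

lemma u_step: assumes N: "N \<ge> 1" shows "u N (Suc m) \<le> u N m - rr N * (u N m)^3 / 4"
proof -
  define K where "K = int m + 3"
  have supp: "\<And>z. \<bar>z\<bar> \<ge> K - 1 \<Longrightarrow> pp N m z = 0" by (rule pp_supp) (simp add: K_def)
  have "u N (Suc m) = (\<Sum>z\<in>{-K..K}. (pp N (Suc m) z)^2)" by (rule u_any[symmetric]) (simp add: K_def)
  also have "\<dots> = (\<Sum>z\<in>{-K..K}. (pp N m z + rr N * (pp N m (z+1) + pp N m (z-1) - 2 * pp N m z))^2)"
    by (simp add: pp_Suc Pr_def)
  also have "\<dots> \<le> (\<Sum>z\<in>{-K..K}. (pp N m z)^2) - rr N * (\<Sum>z\<in>{-K..K}. (pp N m (z+1) - pp N m z)^2)"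
    by (rule energy_step[OF supp]) (use rr_pos[of N] rr_le4[OF N] in auto)
  also have "(\<Sum>z\<in>{-K..K}. (pp N m z)^2) = u N m" by (rule u_any) (simp add: K_def)
  finally have X: "u N (Suc m) \<le> u N m - rr N * (\<Sum>z\<in>{-K..K}. (pp N m (z+1) - pp N m z)^2)" .
  have "rr N * (\<Sum>z\<in>{-K..K}. (pp N m (z+1) - pp N m z)^2) \<ge> rr N * ((u N m)^3 / 4)"
  proof -
    have mass: "(\<Sum>z\<in>{-K..K}. pp N m z) = 1" by (rule pp_mass) (simp add: K_def)
    have "(\<Sum>z\<in>{-K..K}. (pp N m z)^2)^3 \<le> 4 * (\<Sum>z\<in>{-K..K}. (pp N m (z+1) - pp N m z)^2)"
      using nash[of K "pp N m"] supp pp_nonneg mass by blast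
    moreover have "(\<Sum>z\<in>{-K..K}. (pp N m z)^2) = u N m" by (rule u_any) (simp add: K_def)
    ultimately show ?thesis using rr_pos[of N] by (intro mult_left_mono) auto
  qed
  then show ?thesis using X by simp
qed

lemma u_inv: assumes N: "N \<ge> 1" shows "1 / (u N m)^2 \<ge> 1 + rr N * m / 2"
proof (induction m)
  case 0 then show ?case by (simp add: u_0)
next
  case (Suc m)
  have "1 / (u N (Suc m))^2 \<ge> 1 / (u N m)^2 + rr N / 2"
    by (rule u_rec[OF u_pos u_step[OF N] u_pos u_le1]) (use rr_pos[of N] rr_le4[OF N] in auto)
  then show ?case using Suc.IH by (simp add: field_simps)
qed

lemma u_bound: assumes N: "N \<ge> 1" shows "u N m \<le> 1 / sqrt (1 + rr N * m / 2)"
proof -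
  define A where "A = 1 + rr N * m / 2"
  have A1: "A \<ge> 1" using rr_pos[of N] by (simp add: A_def)
  have "1 / (u N m)^2 \<ge> A" using u_inv[OF N] by (simp add: A_def)
  then have "(u N m)^2 * A \<le> 1" using u_pos[of N m] by (simp add: field_simps)
  then have "(u N m)^2 \<le> 1 / A" using A1 by (simp add: field_simps)
  then have "sqrt ((u N m)^2) \<le> sqrt (1 / A)" by (rule real_sqrt_le_mono)
  then show ?thesis using u_pos[of N m] by (simp add: A_def real_sqrt_divide)
qed

lemma sqrt_step:
  fixes A r :: real assumes A: "A \<ge> 1" and r: "0 \<le> r" "r \<le> 1"
  shows "r / sqrt A \<le> 6 * (sqrt (A + r/2) - sqrt A)"
proof -
  define B where "B = A + r / 2"
  have sA: "sqrt A > 0" using A by simp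
  have BA: "B \<le> 4 * A" using A r by (simp add: B_def)
  have sB: "sqrt B \<le> 2 * sqrt A"
  proof -
    have "sqrt B \<le> sqrt (4 * A)" using BA by (rule real_sqrt_le_mono)
    also have "sqrt (4 * A) = 2 * sqrt A" by (simp add: real_sqrt_mult)
    finally show ?thesis .
  qed
  have sB0: "sqrt B \<ge> 0" using A r by (simp add: B_def)
  have prod: "(sqrt B - sqrt A) * (sqrt B + sqrt A) = r / 2"
    using A r by (simp add: B_def algebra_simps power2_eq_square[symmetric])
  have "r / sqrt A = 6 * ((r / 2) / (3 * sqrt A))" using sA by (simp add: field_simps)
  also have "(r / 2) / (3 * sqrt A) \<le> (r / 2) / (sqrt B + sqrt A)"
  proof -
    have pos2: "0 < sqrt B + sqrt A" using sA sB0 by linarith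
    have pos: "0 < sqrt A * (sqrt B + sqrt A)" "0 < sqrt B + sqrt A" using sA pos2 by (simp_all add: mult_pos_pos)
    show ?thesis using sA sB sB0 r pos by (intro divide_left_mono) auto
  qed
  also have "(r / 2) / (sqrt B + sqrt A) = sqrt B - sqrt A"
  proof -
    have "sqrt B + sqrt A > 0" using sA sB0 by linarith
    then show ?thesis unfolding prod[symmetric] by simp
  qed
  finally show ?thesis by (simp add: B_def)
qed

lemma sum_u_bound: assumes N: "N \<ge> 1" shows "rr N * (\<Sum>m<n. u N m) \<le> 6 * sqrt (1 + rr N * n / 2)"
proof -
  have "rr N * (\<Sum>m<n. u N m) = (\<Sum>m<n. rr N * u N m)" by (simp add: sum_distrib_left)
  also have "\<dots> \<le> (\<Sum>m<n. 6 * (sqrt (1 + rr N * Suc m / 2) - sqrt (1 + rr N * m / 2)))"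
  proof (rule sum_mono)
    fix m
    have "rr N * u N m \<le> rr N * (1 / sqrt (1 + rr N * m / 2))"
      by (rule mult_left_mono[OF u_bound[OF N]]) (simp add: less_imp_le rr_pos)
    also have "\<dots> = rr N / sqrt (1 + rr N * m / 2)" by simp
    also have "\<dots> \<le> 6 * (sqrt (1 + rr N * m / 2 + rr N / 2) - sqrt (1 + rr N * m / 2))"
      by (rule sqrt_step) (use rr_pos[of N] rr_le[of N] in auto)
    finally show "rr N * u N m \<le> 6 * (sqrt (1 + rr N * Suc m / 2) - sqrt (1 + rr N * m / 2))"
      by (simp add: algebra_simps add_divide_distrib)
  qed
  also have "\<dots> = (\<Sum>m<n. (\<lambda>m. 6 * sqrt (1 + rr N * real m / 2)) (Suc m) - (\<lambda>m. 6 * sqrt (1 + rr N * real m / 2)) m)"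
    by (simp add: algebra_simps)
  also have "\<dots> = 6 * sqrt (1 + rr N * real n / 2) - 6 * sqrt (1 + rr N * real 0 / 2)"
    by (rule sum_lessThan_telescope)
  also have "\<dots> = 6 * (sqrt (1 + rr N * n / 2) - 1)" by simp
  also have "\<dots> \<le> 6 * sqrt (1 + rr N * n / 2)" by simp
  finally show ?thesis .
qed



lemma Lin_init: "Lin N h init_state = (\<Sum>i\<in>{-int N..int N}. h i)"
  by (simp add: Lin_def init_state_def labels_def)

lemma Qs_F:
  assumes I: "Inv N s"
  shows "Qs N (F N m) s \<le> 2 * rr N * u N m"
proof -
  define S where "S = {-int m - 1..int m - 1}"
  have z: "F N m (x+1) = F N m x" if "x \<notin> S" for x
  proof -
    have "\<bar>x + 1\<bar> > int m" using that by (auto simp: S_def)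
    then have "pp N m (x+1) = 0" by (rule pp_supp)
    then show ?thesis using F_grad[of N m x] by simp
  qed
  have "Qs N (F N m) s \<le> 2 * rr N * (\<Sum>x\<in>S. (F N m (x+1) - F N m x)^2)"
    by (rule Qs_supp[OF I]) (auto simp: S_def z)
  also have "(\<Sum>x\<in>S. (F N m (x+1) - F N m x)^2) = (\<Sum>x\<in>S. (pp N m (x+1))^2)"
    by (simp add: F_grad)
  also have "\<dots> = (\<Sum>z\<in>{-int m..int m}. (pp N m z)^2)"
    unfolding S_def using sum_shift_int[where f="\<lambda>z. (pp N m z)^2" and a="-int m - 1" and b="int m - 1" and c=1]
    by simp
  also have "\<dots> = u N m" by (rule u_any) simp
  finally show ?thesis .
qed

lemma J_iter:
  assumes N: "N \<ge> 1"
  shows "(\<integral>\<^sup>+s. ennreal (exp (\<theta> * Lin N g0 s)) \<partial>iter_law N n)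
     \<le> ennreal (exp (\<theta> * Lin N (F N n) init_state + \<theta>^2 * exp \<bar>\<theta>\<bar> * (6 * sqrt (1 + rr N * n / 2))))"
proof -
  have hk: "\<forall>k<n. F N (n - k) = Pr N (F N (n - Suc k))"
  proof (intro allI impI)
    fix k assume "k < n"
    then have "n - k = Suc (n - Suc k)" by simp
    then show "F N (n - k) = Pr N (F N (n - Suc k))" by (simp add: F_Suc)
  qed
  have Q: "\<forall>k<n. \<forall>s. Inv N s \<longrightarrow> Qs N (F N (n - Suc k)) s \<le> 2 * rr N * u N (n - Suc k)"
    using Qs_F by blast
  have G: "\<forall>k<n. \<forall>x. \<bar>F N (n - Suc k) (x+1) - F N (n - Suc k) x\<bar> \<le> 1"
    by (simp add: F_grad pp_nonneg pp_le1)
  have "(\<integral>\<^sup>+s. ennreal (exp (\<theta> * Lin N ((\<lambda>k. F N (n - k)) n) s)) \<partial>iter_law N n)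
     \<le> ennreal (exp (\<theta> * Lin N ((\<lambda>k. F N (n - k)) 0) init_state + \<theta>^2 * exp (\<bar>\<theta>\<bar> * 1) / 2 * (\<Sum>j<n. 2 * rr N * u N (n - Suc j))))"
    by (rule iter_bound[where hs="\<lambda>k. F N (n - k)"]) (use hk Q G in auto)
  also have "(\<Sum>j<n. 2 * rr N * u N (n - Suc j)) = 2 * (rr N * (\<Sum>j<n. u N j))"
    by (simp add: sum_distrib_left[symmetric] sum.nat_diff_reindex)
  also have "\<theta>^2 * exp (\<bar>\<theta>\<bar> * 1) / 2 * (2 * (rr N * (\<Sum>j<n. u N j))) \<le> \<theta>^2 * exp \<bar>\<theta>\<bar> * (6 * sqrt (1 + rr N * n / 2))"
  proof -
    have "\<theta>^2 * exp \<bar>\<theta>\<bar> * (rr N * (\<Sum>j<n. u N j)) \<le> \<theta>^2 * exp \<bar>\<theta>\<bar> * (6 * sqrt (1 + rr N * n / 2))"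
      by (rule mult_left_mono[OF sum_u_bound[OF N, of n]]) simp
    then show ?thesis by simp
  qed
  finally show ?thesis by (simp add: F_0 ennreal_leI)
qed

lemma S0_bounds: "real N \<le> (\<Sum>i\<in>{-int N..int N}. F N m i) \<and> (\<Sum>i\<in>{-int N..int N}. F N m i) \<le> real N + 1"
proof -
  define X where "X = (\<Sum>x\<in>{-int N..int N - 1}. F N m x)"
  have split: "(\<Sum>i\<in>{-int N..int N}. F N m i) = F N m (int N) + X"
  proof -
    have "{-int N..int N} = insert (int N) {-int N..int N - 1}" by auto
    then show ?thesis by (simp add: X_def)
  qed
  have Y: "(\<Sum>x\<in>{-int N..int N - 1}. F N m (-1 - x)) = X"
    unfolding X_def by (rule sum.reindex_bij_witness[of _ "\<lambda>x. -1 - x" "\<lambda>x. -1 - x"]) auto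
  have "X + X = (\<Sum>x\<in>{-int N..int N - 1}. F N m x + F N m (-1 - x))"
    using Y by (simp add: X_def sum.distrib)
  also have "\<dots> = (\<Sum>x\<in>{-int N..int N - 1}. 1)" by (simp add: F_sym)
  also have "\<dots> = 2 * real N" by simp
  finally have "X = real N" by simp
  then show ?thesis using split F_nonneg[of N m "int N"] F_le1[of N m "int N"] by simp
qed

lemma Lin_g0: "Lin N g0 s = real_of_int (cnt N s)"
  by (simp add: Lin_def cnt_def g0_def of_int_sum if_distrib cong: if_cong)

lemma J_n:
  assumes N: "N \<ge> 1" and th: "\<theta> \<ge> 0"
  shows "measure_pmf.prob (iter_law N n) {s. \<bar>real_of_int (snd s)\<bar> / real N \<ge> a}
    \<le> (1 + exp \<theta>) * exp (- \<theta> * a * N + \<theta>^2 * exp \<theta> * (6 * sqrt (1 + rr N * n / 2)))"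
proof -
  define A :: "sstate set" where "A = {s. \<bar>real_of_int (snd s)\<bar> / real N \<ge> a}"
  define S0 where "S0 = Lin N (F N n) init_state"
  define V where "V = 6 * sqrt (1 + rr N * n / 2)"
  have S0b: "real N \<le> S0" "S0 \<le> real N + 1" using S0_bounds[of N n] by (simp_all add: S0_def Lin_init)
  have Npos: "real N > 0" using N by simp
  have sup: "Inv N s" if "s \<in> set_pmf (iter_law N n)" for s using Inv_iter[OF that] .
  have snd_eq: "Inv N s \<Longrightarrow> real_of_int (snd s) = Lin N g0 s - (real N + 1)" for s
    by (simp add: Inv_def Lin_g0)
  have A_abs: "s \<in> A \<Longrightarrow> \<bar>real_of_int (snd s)\<bar> \<ge> a * N" for s
    using Npos by (simp add: A_def field_simps)
  have P1: "measure_pmf.prob (iter_law N n) {s\<in>A. snd s \<ge> 0} \<le> exp (- \<theta> * (S0 + a * N)) * exp (\<theta> * S0 + \<theta>^2 * exp \<theta> * V)"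
  proof (rule markov_exp[OF th])
    show "(\<integral>\<^sup>+s. ennreal (exp (\<theta> * Lin N g0 s)) \<partial>iter_law N n) \<le> ennreal (exp (\<theta> * S0 + \<theta>^2 * exp \<theta> * V))"
      using J_iter[OF N, where \<theta>=\<theta> and n=n] th by (simp add: S0_def V_def)
    show "\<forall>s\<in>set_pmf (iter_law N n). s \<in> {s\<in>A. snd s \<ge> 0} \<longrightarrow> S0 + a * N \<le> Lin N g0 s"
    proof (intro ballI impI)
      fix s assume s: "s \<in> set_pmf (iter_law N n)" "s \<in> {s\<in>A. snd s \<ge> 0}"
      have "\<bar>real_of_int (snd s)\<bar> \<ge> a * N" "snd s \<ge> 0" using A_abs[of s] s(2) by simp_all
      then have "real_of_int (snd s) \<ge> a * N" by simp
      then show "S0 + a * N \<le> Lin N g0 s" using snd_eq[OF sup[OF s(1)]] S0b by linarith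
    qed
  qed simp
  have P2: "measure_pmf.prob (iter_law N n) {s\<in>A. snd s < 0} \<le> exp (- \<theta> * (- S0 - 1 + a * N)) * exp (- \<theta> * S0 + \<theta>^2 * exp \<theta> * V)"
  proof (rule markov_exp[OF th])
    show "(\<integral>\<^sup>+s. ennreal (exp (\<theta> * (- Lin N g0 s))) \<partial>iter_law N n) \<le> ennreal (exp (- \<theta> * S0 + \<theta>^2 * exp \<theta> * V))"
      using J_iter[OF N, where \<theta>="-\<theta>" and n=n] th by (simp add: S0_def V_def)
    show "\<forall>s\<in>set_pmf (iter_law N n). s \<in> {s\<in>A. snd s < 0} \<longrightarrow> - S0 - 1 + a * N \<le> - Lin N g0 s"
    proof (intro ballI impI)
      fix s assume s: "s \<in> set_pmf (iter_law N n)" "s \<in> {s\<in>A. snd s < 0}"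
      have "\<bar>real_of_int (snd s)\<bar> \<ge> a * N" "snd s < 0" using A_abs[of s] s(2) by simp_all
      then have "- real_of_int (snd s) \<ge> a * N" by simp
      then show "- S0 - 1 + a * N \<le> - Lin N g0 s" using snd_eq[OF sup[OF s(1)]] S0b by linarith
    qed
  qed simp
  have "measure_pmf.prob (iter_law N n) A \<le> measure_pmf.prob (iter_law N n) {s\<in>A. snd s \<ge> 0} + measure_pmf.prob (iter_law N n) {s\<in>A. snd s < 0}"
  proof -
    have e: "A = {s\<in>A. snd s \<ge> 0} \<union> {s\<in>A. snd s < 0}" by auto
    show ?thesis by (subst e) (rule measure_Un_le, simp_all)
  qed
  also have "\<dots> \<le> exp (- \<theta> * (S0 + a * N)) * exp (\<theta> * S0 + \<theta>^2 * exp \<theta> * V)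
     + exp (- \<theta> * (- S0 - 1 + a * N)) * exp (- \<theta> * S0 + \<theta>^2 * exp \<theta> * V)"
    using P1 P2 by simp
  also have "\<dots> = (1 + exp \<theta>) * exp (- \<theta> * a * N + \<theta>^2 * exp \<theta> * V)"
    by (simp add: exp_add[symmetric] algebra_simps)
  finally show ?thesis by (simp add: A_def V_def)
qed



lemma limsup_le_exp:
  assumes ev: "\<forall>\<^sub>F N in sequentially. P N \<le> C * exp (- \<beta> * real N)" and C: "C > 0"
  shows "limsup (\<lambda>N::nat. ereal (1 / real N) * eln (P N)) \<le> ereal (- \<beta>)"
proof -
  have ev2: "\<forall>\<^sub>F N in sequentially. ereal (1 / real N) * eln (P N) \<le> ereal (ln C / real N - \<beta>)"
    using ev eventually_ge_at_top[of "1::nat"]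
  proof eventually_elim
    case (elim N)
    then have Np: "real N > 0" by simp
    show ?case
    proof (cases "P N \<le> 0")
      case True
      then show ?thesis using Np by (simp add: eln_def)
    next
      case False
      then have Pp: "P N > 0" by simp
      have "ln (P N) \<le> ln (C * exp (- \<beta> * real N))" using elim Pp C by simp
      also have "\<dots> = ln C - \<beta> * real N" using C by (simp add: ln_mult)
      finally have "ln (P N) / real N \<le> (ln C - \<beta> * real N) / real N" using Np by (simp add: divide_right_mono)
      also have "\<dots> = ln C / real N - \<beta>" using Np by (simp add: field_simps)
      finally show ?thesis using Pp by (simp add: eln_def)
    qed
  qed
  have lim: "(\<lambda>N::nat. ereal (ln C / real N - \<beta>)) \<longlonglongrightarrow> ereal (0 - \<beta>)"
    by (intro tendsto_ereal tendsto_diff lim_const_over_n tendsto_const)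
  have "limsup (\<lambda>N::nat. ereal (1 / real N) * eln (P N)) \<le> limsup (\<lambda>N::nat. ereal (ln C / real N - \<beta>))"
    by (rule Limsup_mono[OF ev2])
  also have "\<dots> = ereal (0 - \<beta>)" by (rule lim_imp_Limsup[OF _ lim]) simp
  finally show ?thesis by simp
qed

lemma limsup_neg_inf:
  assumes ev: "\<forall>\<^sub>F N in sequentially. P N \<le> 0"
  shows "limsup (\<lambda>N::nat. ereal (1 / real N) * eln (P N)) \<le> - \<infinity>"
proof -
  have ev2: "\<forall>\<^sub>F N in sequentially. ereal (1 / real N) * eln (P N) \<le> - \<infinity>"
    using ev eventually_ge_at_top[of "1::nat"]
    by eventually_elim (simp add: eln_def)
  have "limsup (\<lambda>N::nat. ereal (1 / real N) * eln (P N)) \<le> limsup (\<lambda>N::nat. - \<infinity>::ereal)"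
    by (rule Limsup_mono[OF ev2])
  also have "\<dots> = - \<infinity>" by (rule Limsup_const) simp
  finally show ?thesis .
qed

lemma poisson_bound:
  fixes c t B :: real and P :: "nat \<Rightarrow> real"
  assumes mu: "c * t \<ge> 0" and P01: "\<And>n. 0 \<le> P n \<and> P n \<le> 1"
    and PB: "\<And>n. real n \<le> 2 * exp 1 * (c * t) \<Longrightarrow> P n \<le> B" and B0: "B \<ge> 0"
  shows "(\<Sum>n. exp (- c * t) * (c * t) ^ n / fact n * P n) \<le> B + exp (- (c * t))"
proof -
  define \<mu> where "\<mu> = c * t"
  define w where "w n = exp (- \<mu>) * \<mu> ^ n / fact n" for n
  have e1: "(\<lambda>n. \<mu> ^ n / fact n) sums exp \<mu>" using exp_converges[of \<mu>] by (simp add: divide_inverse mult.commute)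
  have e2: "(\<lambda>n. (exp 1 * \<mu>) ^ n / fact n) sums exp (exp 1 * \<mu>)"
    using exp_converges[of "exp 1 * \<mu>"] by (simp add: divide_inverse mult.commute)
  have wsum: "w sums (exp (- \<mu>) * exp \<mu>)" unfolding w_def
    using sums_mult[OF e1, of "exp (- \<mu>)"] by (simp add: mult.assoc)
  define g where "g n = B * w n + exp (- 2 * exp 1 * \<mu>) * exp (- \<mu>) * ((exp 1 * \<mu>) ^ n / fact n)" for n
  have gsum: "g sums (B * (exp (- \<mu>) * exp \<mu>) + exp (- 2 * exp 1 * \<mu>) * exp (- \<mu>) * exp (exp 1 * \<mu>))"
    unfolding g_def by (intro sums_add sums_mult wsum e2)
  have w0: "w n \<ge> 0" for n using mu by (simp add: w_def \<mu>_def)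
  have fg: "w n * P n \<le> g n" for n
  proof -
    have Pn: "P n \<le> B + exp (real n - 2 * exp 1 * \<mu>)"
    proof (cases "real n \<le> 2 * exp 1 * \<mu>")
      case True then show ?thesis using PB[of n] by (simp add: \<mu>_def add_increasing2)
    next
      case False
      then have "1 \<le> exp (real n - 2 * exp 1 * \<mu>)" by simp
      then show ?thesis using P01[of n] B0 by linarith
    qed
    have X: "w n * P n \<le> B * w n + w n * exp (real n - 2 * exp 1 * \<mu>)"
      using mult_left_mono[OF Pn w0] by (simp add: distrib_left mult.commute)
    have Y: "w n * exp (real n - 2 * exp 1 * \<mu>) = exp (- 2 * exp 1 * \<mu>) * exp (- \<mu>) * ((exp 1 * \<mu>) ^ n / fact n)"
    proof -
      have "exp (real n - 2 * exp 1 * \<mu>) = exp 1 ^ n * exp (- 2 * exp 1 * \<mu>)"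
        by (simp add: exp_diff exp_of_nat_mult[symmetric] divide_inverse exp_minus)
      then show ?thesis by (simp add: w_def power_mult_distrib)
    qed
    show ?thesis unfolding g_def using X Y by linarith
  qed
  have summ: "summable (\<lambda>n. w n * P n)"
    by (rule summable_comparison_test[OF _ sums_summable[OF wsum]])
       (use w0 P01 in \<open>auto intro!: exI[of _ 0] simp: abs_mult mult_right_le_one_le\<close>)
  have "(\<Sum>n. w n * P n) \<le> B * (exp (- \<mu>) * exp \<mu>) + exp (- 2 * exp 1 * \<mu>) * exp (- \<mu>) * exp (exp 1 * \<mu>)"
    by (rule sums_le[OF _ summable_sums[OF summ] gsum]) (use fg in auto)
  also have "\<dots> = B + exp (- \<mu> - exp 1 * \<mu>)" by (simp add: exp_add[symmetric] exp_minus_inverse)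
  also have "\<dots> \<le> B + exp (- \<mu>)" using mu by (simp add: \<mu>_def)
  finally show ?thesis by (simp add: w_def \<mu>_def)
qed

lemma ev_real_ge: "\<forall>\<^sub>F N in sequentially. c \<le> real N"
proof -
  obtain k :: nat where "c \<le> real k" using real_arch_simple by blast
  then show ?thesis unfolding eventually_sequentially
    by (intro exI[of _ k]) (auto intro: order_trans)
qed

definition kap :: "real \<Rightarrow> real" where "kap T = 6 * sqrt (1 + 2 * T)"

lemma kap_ge: "T \<ge> 0 \<Longrightarrow> kap T \<ge> 6" by (simp add: kap_def)

lemma rr_n_bound:
  assumes N: "N \<ge> 1" and T: "T > 0" and n: "real n \<le> 2 * exp 1 * (unif_rate N * (real N ^ 2 * T))"
  shows "6 * sqrt (1 + rr N * real n / 2) \<le> kap T * real N"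
proof -
  have "rr N * real n \<le> rr N * (2 * exp 1 * (unif_rate N * (real N ^ 2 * T)))"
    by (rule mult_left_mono[OF n]) (simp add: less_imp_le rr_pos)
  also have "\<dots> = exp 1 * real N ^ 2 * T" by (simp add: rr_def unif_rate_def field_simps)
  finally have a: "rr N * real n \<le> exp 1 * real N ^ 2 * T" .
  have e3: "exp (1::real) \<le> 3" by (rule exp_le)
  have N2: "real N ^ 2 \<ge> 1" using N by simp
  have "1 + rr N * real n / 2 \<le> 1 + exp 1 * real N ^ 2 * T / 2" using a by simp
  also have "\<dots> \<le> real N ^ 2 * (1 + 2 * T)"
  proof -
    have "exp 1 * real N ^ 2 * T / 2 \<le> 2 * real N ^ 2 * T"
      using e3 T N2 by (simp add: field_simps mult_right_mono)
    then show ?thesis using N2 by (simp add: algebra_simps)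
  qed
  finally have "sqrt (1 + rr N * real n / 2) \<le> sqrt (real N ^ 2 * (1 + 2 * T))" by (rule real_sqrt_le_mono)
  also have "\<dots> = real N * sqrt (1 + 2 * T)" by (simp add: real_sqrt_mult)
  finally have "6 * sqrt (1 + rr N * real n / 2) \<le> 6 * (real N * sqrt (1 + 2 * T))" by simp
  then show ?thesis by (simp add: kap_def mult_ac)
qed

lemma J_n_final:
  assumes N: "N \<ge> 1" and T: "T > 0" and a: "0 \<le> a" "a \<le> 1"
    and n: "real n \<le> 2 * exp 1 * (unif_rate N * (real N ^ 2 * T))"
  shows "measure_pmf.prob (iter_law N n) {s. \<bar>real_of_int (snd s)\<bar> / real N \<ge> a}
     \<le> 3 * exp (- (a^2 / (8 * kap T)) * real N)"
proof -
  define \<kappa> where "\<kappa> = kap T"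
  define \<theta> where "\<theta> = a / (4 * \<kappa>)"
  have k6: "\<kappa> \<ge> 6" using kap_ge T by (simp add: \<kappa>_def)
  have th0: "\<theta> \<ge> 0" using a k6 by (simp add: \<theta>_def)
  have th1: "\<theta> \<le> 1" using a k6 by (simp add: \<theta>_def field_simps)
  have eth: "exp \<theta> \<le> 2"
  proof -
    have "exp \<theta> \<le> 1 + \<theta> + \<theta>^2" by (rule exp_bound[OF th0 th1])
    moreover have "\<theta> \<le> 1/4" using a k6 by (simp add: \<theta>_def field_simps)
    moreover have "\<theta>^2 \<le> \<theta>" using th0 th1 by (simp add: power2_eq_square mult_left_le_one_le)
    ultimately show ?thesis by linarith
  qed
  have V: "6 * sqrt (1 + rr N * real n / 2) \<le> \<kappa> * real N" using rr_n_bound[OF N T n] by (simp add: \<kappa>_def)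
  have "measure_pmf.prob (iter_law N n) {s. \<bar>real_of_int (snd s)\<bar> / real N \<ge> a}
     \<le> (1 + exp \<theta>) * exp (- \<theta> * a * N + \<theta>^2 * exp \<theta> * (6 * sqrt (1 + rr N * n / 2)))"
    by (rule J_n[OF N th0])
  also have "\<dots> \<le> 3 * exp (- \<theta> * a * N + \<theta>^2 * 2 * (\<kappa> * real N))"
  proof (rule mult_mono)
    show "1 + exp \<theta> \<le> 3" using eth by simp
    have t2: "\<theta>^2 * exp \<theta> \<le> \<theta>^2 * 2" by (rule mult_left_mono[OF eth]) simp
    have "\<theta>^2 * exp \<theta> * (6 * sqrt (1 + rr N * n / 2)) \<le> \<theta>^2 * 2 * (\<kappa> * real N)"
      by (rule mult_mono[OF t2 V]) (use rr_pos[of N] in \<open>auto intro!: add_nonneg_nonneg\<close>)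
    then show "exp (- \<theta> * a * N + \<theta>^2 * exp \<theta> * (6 * sqrt (1 + rr N * n / 2))) \<le> exp (- \<theta> * a * N + \<theta>^2 * 2 * (\<kappa> * real N))"
      by simp
  qed auto
  also have "- \<theta> * a * N + \<theta>^2 * 2 * (\<kappa> * real N) = - (a^2 / (8 * \<kappa>)) * real N"
    using k6 by (simp add: \<theta>_def power2_eq_square field_simps)
  finally show ?thesis by (simp add: \<kappa>_def)
qed

lemma cnt_bounds: "0 \<le> cnt N s \<and> cnt N s \<le> 2 * int N + 1"
proof -
  have "cnt N s \<le> (\<Sum>i\<in>labels N. 1)" unfolding cnt_def by (rule sum_mono) auto
  moreover have "0 \<le> cnt N s" unfolding cnt_def by (rule sum_nonneg) auto
  ultimately show ?thesis by (simp add: card_labels)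
qed

lemma ssep_prob_eq0:
  assumes "\<And>n. measure_pmf.prob (iter_law N n) A = 0"
  shows "ssep_prob N t A = 0"
  unfolding ssep_prob_def using assms by simp

lemma J_part:
  assumes T: "T > 0" and a: "0 \<le> a"
  shows "limsup (\<lambda>N::nat. ereal (1 / real N) * eln (ssep_prob N (real N ^ 2 * T)
        {s. \<bar>real_of_int (snd s)\<bar> / real N \<ge> a}))
       \<le> (if a \<le> 1 then ereal (- (1 / (8 * kap T)) * a ^ 2) else - \<infinity>)"
proof (cases "a \<le> 1")
  case True
  define \<beta> where "\<beta> = a^2 / (8 * kap T)"
  have k6: "kap T \<ge> 6" using kap_ge T by simp
  have b0: "\<beta> \<ge> 0" using k6 by (simp add: \<beta>_def)
  have ev: "\<forall>\<^sub>F N in sequentially. ssep_prob N (real N ^ 2 * T) {s. \<bar>real_of_int (snd s)\<bar> / real N \<ge> a}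
      \<le> 4 * exp (- \<beta> * real N)"
  proof -
    have "\<forall>\<^sub>F N in sequentially. real N \<ge> max 1 \<beta> / T" by (rule ev_real_ge) 
    then show ?thesis
    proof (rule eventually_mono)
      fix N :: nat assume NN: "real N \<ge> max 1 \<beta> / T"
      have N1: "N \<ge> 1"
      proof -
        have "real N \<ge> 1 / T" using NN T by (smt (verit) divide_right_mono max.cobounded1)
        moreover have "1 / T > 0" using T by simp
        ultimately have "real N > 0" by linarith
        then show ?thesis by simp
      qed
      define A :: "sstate set" where "A = {s. \<bar>real_of_int (snd s)\<bar> / real N \<ge> a}"
      have "ssep_prob N (real N ^ 2 * T) A \<le> 3 * exp (- \<beta> * real N) + exp (- (unif_rate N * (real N ^ 2 * T)))"
        unfolding ssep_prob_def
      proof (rule poisson_bound)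
        show "unif_rate N * (real N ^ 2 * T) \<ge> 0" using T by (simp add: unif_rate_def)
        show "0 \<le> measure_pmf.prob (iter_law N n) A \<and> measure_pmf.prob (iter_law N n) A \<le> 1" for n
          by simp
        show "measure_pmf.prob (iter_law N n) A \<le> 3 * exp (- \<beta> * real N)"
          if "real n \<le> 2 * exp 1 * (unif_rate N * (real N ^ 2 * T))" for n
          using J_n_final[OF N1 T a True that] by (simp add: A_def \<beta>_def)
      qed simp
      also have "exp (- (unif_rate N * (real N ^ 2 * T))) \<le> exp (- \<beta> * real N)"
      proof -
        have "\<beta> \<le> T * real N" using NN T by (simp add: field_simps)
        then have "\<beta> * real N \<le> T * real N * real N" by (rule mult_right_mono) simp
        also have "\<dots> \<le> unif_rate N * (real N ^ 2 * T)"
          using T by (simp add: unif_rate_def power2_eq_square field_simps mult_right_mono)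
        finally show ?thesis by simp
      qed
      finally show "ssep_prob N (real N ^ 2 * T) {s. \<bar>real_of_int (snd s)\<bar> / real N \<ge> a} \<le> 4 * exp (- \<beta> * real N)"
        by (simp add: A_def)
    qed
  qed
  have "limsup (\<lambda>N::nat. ereal (1 / real N) * eln (ssep_prob N (real N ^ 2 * T)
        {s. \<bar>real_of_int (snd s)\<bar> / real N \<ge> a})) \<le> ereal (- \<beta>)"
    by (rule limsup_le_exp[OF ev]) simp
  then show ?thesis using True by (simp add: \<beta>_def)
next
  case False
  have ev: "\<forall>\<^sub>F N in sequentially. ssep_prob N (real N ^ 2 * T) {s. \<bar>real_of_int (snd s)\<bar> / real N \<ge> a} \<le> 0"
  proof -
    have "\<forall>\<^sub>F N in sequentially. real N \<ge> 2 / (a - 1)" by (rule ev_real_ge)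
    then show ?thesis
    proof (rule eventually_mono)
      fix N :: nat assume NN: "real N \<ge> 2 / (a - 1)"
      have a1: "a - 1 > 0" using False by simp
      have NA: "real N * (a - 1) \<ge> 2" using NN a1 by (simp add: field_simps)
      have Np: "real N > 0" using NA a1 by (smt (verit) mult_nonpos_nonneg of_nat_0_le_iff)
      show "ssep_prob N (real N ^ 2 * T) {s. \<bar>real_of_int (snd s)\<bar> / real N \<ge> a} \<le> 0"
      proof -
        have "measure_pmf.prob (iter_law N n) {s. \<bar>real_of_int (snd s)\<bar> / real N \<ge> a} = 0" for n
        proof (subst measure_pmf_zero_iff, rule ccontr)
          assume "\<not> set_pmf (iter_law N n) \<inter> {s. \<bar>real_of_int (snd s)\<bar> / real N \<ge> a} = {}"
          then obtain s where s: "s \<in> set_pmf (iter_law N n)" "\<bar>real_of_int (snd s)\<bar> / real N \<ge> a" by auto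
          have I: "Inv N s" by (rule Inv_iter[OF s(1)])
          have "snd s = cnt N s - (int N + 1)" using I by (simp add: Inv_def)
          then have "\<bar>snd s\<bar> \<le> int N + 1" using cnt_bounds[of N s] by linarith
          then have "\<bar>real_of_int (snd s)\<bar> \<le> real N + 1" by linarith
          moreover have "\<bar>real_of_int (snd s)\<bar> \<ge> a * real N" using s(2) Np by (simp add: field_simps)
          ultimately show False using NA by (simp add: algebra_simps)
        qed
        then show ?thesis by (simp add: ssep_prob_eq0)
      qed
    qed
  qed
  show ?thesis using limsup_neg_inf[OF ev] False by simp
qed



lemma Pr_refl:
  assumes s: "\<sigma> \<in> {1, -1::int}"
  shows "Pr N (\<lambda>x. f (\<sigma> * x - y)) = (\<lambda>x. Pr N f (\<sigma> * x - y))"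
proof (rule ext)
  fix x
  show "Pr N (\<lambda>x. f (\<sigma> * x - y)) x = Pr N f (\<sigma> * x - y)"
  proof (cases "\<sigma> = 1")
    case True then show ?thesis by (simp add: Pr_def algebra_simps)
  next
    case False
    then have sm: "\<sigma> = -1" using s by auto
    have a: "\<sigma> * (x+1) - y = (\<sigma> * x - y) - 1" and b: "\<sigma> * (x - 1) - y = (\<sigma> * x - y) + 1"
      using sm by simp_all
    show ?thesis unfolding Pr_def a b by (simp add: algebra_simps)
  qed
qed

lemma Qs_refl:
  assumes I: "Inv N s" and s: "\<sigma> \<in> {1, -1::int}"
  shows "Qs N (\<lambda>x. F N m (\<sigma> * x - y)) s \<le> 2 * rr N * u N m"
proof (cases "\<sigma> = 1")
  case True
  define S where "S = {y - int m - 1..y + int m - 1}"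
  have z: "F N m ((x+1) - y) = F N m (x - y)" if "x \<notin> S" for x
  proof -
    have "\<bar>x + 1 - y\<bar> > int m" using that by (auto simp: S_def)
    then have "pp N m (x + 1 - y) = 0" by (rule pp_supp)
    then show ?thesis using F_grad[of N m "x - y"] by (simp add: algebra_simps)
  qed
  have "Qs N (\<lambda>x. F N m (x - y)) s \<le> 2 * rr N * (\<Sum>x\<in>S. (F N m ((x+1) - y) - F N m (x - y))^2)"
    by (rule Qs_supp[OF I]) (auto simp: S_def z)
  also have "(\<Sum>x\<in>S. (F N m ((x+1) - y) - F N m (x - y))^2) = (\<Sum>x\<in>S. (pp N m ((x - y) + 1))^2)"
  proof (rule sum.cong)
    fix x
    have e: "(x + 1) - y = (x - y) + 1" by simp
    show "(F N m ((x+1) - y) - F N m (x - y))^2 = (pp N m ((x - y) + 1))^2" unfolding e F_grad ..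
  qed simp
  also have "\<dots> = (\<Sum>z\<in>{-int m..int m}. (pp N m z)^2)"
    unfolding S_def by (rule sum.reindex_bij_witness[of _ "\<lambda>z. z - 1 + y" "\<lambda>x. (x - y) + 1"]) auto
  also have "\<dots> = u N m" by (rule u_any) simp
  finally show ?thesis using True by simp
next
  case False
  then have sm: "\<sigma> = -1" using s by auto
  define S where "S = {-y - int m..-y + int m}"
  have gr: "F N m (- (x+1) - y) - F N m (- x - y) = - pp N m (- x - y)" for x
  proof -
    have e: "- (x+1) - y = (- x - y) - 1" by simp
    show ?thesis unfolding e pp_def by simp
  qed
  have z: "F N m (- (x+1) - y) = F N m (- x - y)" if "x \<notin> S" for x
  proof -
    have "\<bar>- x - y\<bar> > int m" using that by (auto simp: S_def)
    then have "pp N m (- x - y) = 0" by (rule pp_supp)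
    then show ?thesis using gr[of x] by simp
  qed
  have "Qs N (\<lambda>x. F N m (- x - y)) s \<le> 2 * rr N * (\<Sum>x\<in>S. (F N m (- (x+1) - y) - F N m (- x - y))^2)"
    by (rule Qs_supp[OF I]) (simp add: S_def, blast intro: z)
  also have "(\<Sum>x\<in>S. (F N m (- (x+1) - y) - F N m (- x - y))^2) = (\<Sum>x\<in>S. (pp N m (- x - y))^2)"
    by (rule sum.cong[OF refl]) (simp only: gr power2_minus)
  also have "\<dots> = (\<Sum>z\<in>{-int m..int m}. (pp N m z)^2)"
    unfolding S_def by (rule sum.reindex_bij_witness[of _ "\<lambda>z. - z - y" "\<lambda>x. - x - y"]) auto
  also have "\<dots> = u N m" by (rule u_any) simp
  finally show ?thesis using sm by simp
qed

lemma gen_iter: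
  assumes N: "N \<ge> 1" and s: "\<sigma> \<in> {1, -1::int}"
  shows "(\<integral>\<^sup>+st. ennreal (exp (\<theta> * Lin N (\<lambda>x. g0 (\<sigma> * x - y)) st)) \<partial>iter_law N n)
     \<le> ennreal (exp (\<theta> * Lin N (\<lambda>x. F N n (\<sigma> * x - y)) init_state + \<theta>^2 * exp \<bar>\<theta>\<bar> * (6 * sqrt (1 + rr N * n / 2))))"
proof -
  define hs where "hs k = (\<lambda>x. F N (n - k) (\<sigma> * x - y))" for k
  have hk: "\<forall>k<n. hs k = Pr N (hs (Suc k))"
  proof (intro allI impI)
    fix k assume "k < n"
    then have "n - k = Suc (n - Suc k)" by simp
    then show "hs k = Pr N (hs (Suc k))" by (simp add: hs_def F_Suc Pr_refl[OF s])
  qed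
  have Q: "\<forall>k<n. \<forall>st. Inv N st \<longrightarrow> Qs N (hs (Suc k)) st \<le> 2 * rr N * u N (n - Suc k)"
    using Qs_refl s by (simp add: hs_def)
  have G: "\<forall>k<n. \<forall>x. \<bar>hs (Suc k) (x+1) - hs (Suc k) x\<bar> \<le> 1"
  proof (intro allI impI)
    fix k x
    show "\<bar>hs (Suc k) (x+1) - hs (Suc k) x\<bar> \<le> 1"
    proof (cases "\<sigma> = 1")
      case True then show ?thesis using F_grad[of N "n - Suc k" "x - y"] pp_nonneg pp_le1
        by (simp add: hs_def algebra_simps)
    next
      case False then have sm: "\<sigma> = -1" using s by auto
      have e1: "\<sigma> * (x + 1) - y = (- x - y - 1)" and e2: "\<sigma> * x - y = (- x - y - 1) + 1" using sm by simp_all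
      have "\<bar>hs (Suc k) (x+1) - hs (Suc k) x\<bar> = \<bar>F N (n - Suc k) ((- x - y - 1) + 1) - F N (n - Suc k) (- x - y - 1)\<bar>"
        unfolding hs_def e1 e2 by (simp add: abs_minus_commute)
      also have "\<dots> = \<bar>pp N (n - Suc k) ((- x - y - 1) + 1)\<bar>" unfolding F_grad ..
      also have "\<dots> \<le> 1" using pp_nonneg pp_le1 by simp
      finally show ?thesis .
    qed
  qed
  have "(\<integral>\<^sup>+st. ennreal (exp (\<theta> * Lin N (hs n) st)) \<partial>iter_law N n)
     \<le> ennreal (exp (\<theta> * Lin N (hs 0) init_state + \<theta>^2 * exp (\<bar>\<theta>\<bar> * 1) / 2 * (\<Sum>j<n. 2 * rr N * u N (n - Suc j))))"
    by (rule iter_bound[where hs=hs]) (use hk Q G in auto)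
  also have "(\<Sum>j<n. 2 * rr N * u N (n - Suc j)) = 2 * (rr N * (\<Sum>j<n. u N j))"
    by (simp add: sum_distrib_left[symmetric] sum.nat_diff_reindex)
  also have "\<theta>^2 * exp (\<bar>\<theta>\<bar> * 1) / 2 * (2 * (rr N * (\<Sum>j<n. u N j))) \<le> \<theta>^2 * exp \<bar>\<theta>\<bar> * (6 * sqrt (1 + rr N * n / 2))"
  proof -
    have "\<theta>^2 * exp \<bar>\<theta>\<bar> * (rr N * (\<Sum>j<n. u N j)) \<le> \<theta>^2 * exp \<bar>\<theta>\<bar> * (6 * sqrt (1 + rr N * n / 2))"
      by (rule mult_left_mono[OF sum_u_bound[OF N, of n]]) simp
    then show ?thesis by simp
  qed
  finally show ?thesis by (simp add: hs_def F_0 ennreal_leI)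
qed



lemma pp_var: "K \<ge> int m + 1 \<Longrightarrow> (\<Sum>z\<in>{-K..K}. (of_int z)^2 * pp N m z) = 2 * rr N * real m"
proof (induction m arbitrary: K)
  case 0
  have "(\<Sum>z\<in>{-K..K}. (of_int z)^2 * pp N 0 z) = (\<Sum>z\<in>{-K..K}. (0::real))"
    by (rule sum.cong) (auto simp: pp_0)
  then show ?case by simp
next
  case (Suc m)
  let ?p = "pp N m"
  have K: "K \<ge> int m + 2" using Suc.prems by simp
  have z: "\<And>w. \<bar>w\<bar> \<ge> K \<Longrightarrow> ?p w = 0" by (rule pp_supp) (use K in auto)
  have s1: "(\<Sum>z\<in>{-K..K}. (of_int z)^2 * ?p (z+1)) = (\<Sum>z\<in>{-K..K}. (of_int z - 1)^2 * ?p z)"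
    using shift_p1[where f="\<lambda>w. (of_int w - 1)^2 * ?p w" and K=K] z by simp
  have s2: "(\<Sum>z\<in>{-K..K}. (of_int z)^2 * ?p (z-1)) = (\<Sum>z\<in>{-K..K}. (of_int z + 1)^2 * ?p z)"
    using shift_m1[where f="\<lambda>w. (of_int w + 1)^2 * ?p w" and K=K] z by simp
  have mass: "(\<Sum>z\<in>{-K..K}. ?p z) = 1" by (rule pp_mass) (use K in auto)
  have "(\<Sum>z\<in>{-K..K}. (of_int z)^2 * pp N (Suc m) z)
     = (\<Sum>z\<in>{-K..K}. (of_int z)^2 * ?p z) + rr N * ((\<Sum>z\<in>{-K..K}. (of_int z)^2 * ?p (z+1))
        + (\<Sum>z\<in>{-K..K}. (of_int z)^2 * ?p (z-1)) - 2 * (\<Sum>z\<in>{-K..K}. (of_int z)^2 * ?p z))"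
    by (simp add: pp_Suc Pr_def algebra_simps sum.distrib sum_subtractf sum_distrib_left)
  also have "(\<Sum>z\<in>{-K..K}. (of_int z)^2 * ?p (z+1)) + (\<Sum>z\<in>{-K..K}. (of_int z)^2 * ?p (z-1))
        - 2 * (\<Sum>z\<in>{-K..K}. (of_int z)^2 * ?p z) = 2 * (\<Sum>z\<in>{-K..K}. ?p z)"
    unfolding s1 s2 by (simp add: power2_eq_square algebra_simps sum.distrib sum_subtractf sum_distrib_left)
  also have "(\<Sum>z\<in>{-K..K}. (of_int z)^2 * ?p z) = 2 * rr N * real m" using Suc.IH K by simp
  finally show ?case using mass by (simp add: algebra_simps)
qed

lemma pp_mono1: assumes N: "N \<ge> 1" shows "0 \<le> z \<Longrightarrow> pp N m (z+1) \<le> pp N m z"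
proof (induction m arbitrary: z)
  case 0 then show ?case by (simp add: pp_0)
next
  case (Suc m)
  define r where "r = rr N"
  have r0: "0 \<le> r" "r \<le> 1/4" using rr_pos[of N] rr_le4[OF N] by (simp_all add: r_def)
  let ?p = "pp N m"
  have eq: "pp N (Suc m) z - pp N (Suc m) (z+1) =
     (1 - 2*r) * (?p z - ?p (z+1)) + r * (?p (z+1) - ?p (z+2)) + r * (?p (z-1) - ?p z)"
    by (simp add: pp_Suc Pr_def r_def algebra_simps)
  have d1: "?p (z+1) \<le> ?p z" by (rule Suc.IH) (use Suc.prems in simp)
  have d2: "?p (z+2) \<le> ?p (z+1)" using Suc.IH[of "z+1"] Suc.prems by (simp add: add.assoc)
  show ?case
  proof (cases "z = 0")
    case True
    have sym: "?p (-1) = ?p 1" using pp_sym[of N m 1] by simp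
    have "(1 - 2*r) * (?p 0 - ?p 1) + r * (?p 1 - ?p 2) + r * (?p (-1) - ?p 0)
        = (1 - 3*r) * (?p 0 - ?p 1) + r * (?p 1 - ?p 2)" using sym by (simp add: algebra_simps)
    moreover have "(1 - 3*r) * (?p 0 - ?p 1) \<ge> 0" using d1 True r0 by simp
    moreover have "r * (?p 1 - ?p 2) \<ge> 0" using d2 True r0 by simp
    ultimately show ?thesis using eq True by simp
  next
    case False
    then have "z - 1 \<ge> 0" using Suc.prems by simp
    then have d3: "?p (z - 1 + 1) \<le> ?p (z - 1)" by (rule Suc.IH)
    have "(1 - 2*r) * (?p z - ?p (z+1)) \<ge> 0" using d1 r0 by simp
    moreover have "r * (?p (z+1) - ?p (z+2)) \<ge> 0" using d2 r0 by simp
    moreover have "r * (?p (z-1) - ?p z) \<ge> 0" using d3 r0 by simp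
    ultimately show ?thesis using eq by simp
  qed
qed

lemma pp_mono: assumes N: "N \<ge> 1" shows "0 \<le> a \<Longrightarrow> a \<le> b \<Longrightarrow> pp N m b \<le> pp N m a"
proof (induction "nat (b - a)" arbitrary: b)
  case 0 then show ?case by simp
next
  case (Suc k)
  have "pp N m b \<le> pp N m (b - 1)" using pp_mono1[OF N, of "b - 1" m] Suc by simp
  also have "pp N m (b - 1) \<le> pp N m a" by (rule Suc.hyps(1)) (use Suc in auto)
  finally show ?case .
qed

lemma pp_abs: "pp N m z = pp N m \<bar>z\<bar>"
  by (cases "z \<ge> 0") (simp_all add: pp_sym[of N m "-z", simplified])

definition mm :: "nat \<Rightarrow> nat \<Rightarrow> int \<Rightarrow> real" where "mm N n K = (\<Sum>z\<in>{-K..K}. pp N n z)"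

lemma mm_Suc: "K \<ge> 0 \<Longrightarrow> mm N n (K+1) = mm N n K + 2 * pp N n (K+1)"
proof -
  assume K: "K \<ge> 0"
  have "{-(K+1)..K+1} = insert (K+1) (insert (-(K+1)) {-K..K})" using K by auto
  then have "mm N n (K+1) = pp N n (K+1) + (pp N n (-(K+1)) + mm N n K)"
    unfolding mm_def using K by simp
  then show ?thesis using pp_sym[of N n "K+1"] by simp
qed

lemma mm_ratio:
  assumes N: "N \<ge> 1" and K: "0 \<le> K"
  shows "K \<le> L \<Longrightarrow> (2 * of_int L + 1) * mm N n K \<ge> (2 * of_int K + 1) * mm N n L"
proof (induction "nat (L - K)" arbitrary: L)
  case 0 then have "L = K" by simp
  then show ?case by simp
next
  case (Suc k)
  define L' where "L' = L - 1"
  have L': "K \<le> L'" "L = L' + 1" using Suc by (auto simp: L'_def)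
  have IH: "(2 * of_int L' + 1) * mm N n K \<ge> (2 * of_int K + 1) * mm N n L'"
    using Suc.hyps(1)[of L'] Suc.hyps(2) L' by simp
  have lb: "mm N n K \<ge> (2 * of_int K + 1) * pp N n (L'+1)"
  proof -
    have "(\<Sum>z\<in>{-K..K}. pp N n (L'+1)) \<le> (\<Sum>z\<in>{-K..K}. pp N n z)"
    proof (rule sum_mono)
      fix z assume z: "z \<in> {-K..K}"
      have "pp N n (L'+1) \<le> pp N n \<bar>z\<bar>" by (rule pp_mono[OF N]) (use z L' in auto)
      then show "pp N n (L'+1) \<le> pp N n z" using pp_abs[of N n z] by simp
    qed
    moreover have "card {-K..K} = nat (2 * K + 1)" by simp
    ultimately show ?thesis using K by (simp add: mm_def of_nat_nat)
  qed
  have "(2 * of_int K + 1) * mm N n L = (2 * of_int K + 1) * mm N n L' + 2 * ((2 * of_int K + 1) * pp N n (L'+1))"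
    using mm_Suc[of L' N n] L' K by (simp add: algebra_simps)
  also have "\<dots> \<le> (2 * of_int L' + 1) * mm N n K + 2 * mm N n K" using IH lb by simp
  also have "\<dots> = (2 * of_int L + 1) * mm N n K" using L' by (simp add: algebra_simps)
  finally show ?case .
qed

lemma mm_cheb:
  assumes L: "L \<ge> 0"
  shows "mm N n L \<ge> 1 - 2 * rr N * real n / (of_int L + 1)^2"
proof -
  define K where "K = max L (int n + 1)"
  have KL: "{-L..L} \<subseteq> {-K..K}" by (auto simp: K_def)
  have mass: "(\<Sum>z\<in>{-K..K}. pp N n z) = 1" by (rule pp_mass) (simp add: K_def)
  have var: "(\<Sum>z\<in>{-K..K}. (of_int z)^2 * pp N n z) = 2 * rr N * real n" by (rule pp_var) (simp add: K_def)
  have Lp: "(of_int L + 1 :: real) > 0" using L by simp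
  have split: "(\<Sum>z\<in>{-K..K}. pp N n z) = mm N n L + (\<Sum>z\<in>{-K..K} - {-L..L}. pp N n z)"
    unfolding mm_def using KL by (simp add: sum.subset_diff[of "{-L..L}" "{-K..K}"])
  have "(\<Sum>z\<in>{-K..K} - {-L..L}. pp N n z) \<le> (\<Sum>z\<in>{-K..K} - {-L..L}. (of_int z)^2 * pp N n z / (of_int L + 1)^2)"
  proof (rule sum_mono)
    fix z assume z: "z \<in> {-K..K} - {-L..L}"
    then have "\<bar>z\<bar> \<ge> L + 1" by auto
    then have "(of_int L + 1)^2 \<le> (of_int z :: real)^2"
      using L by (metis (mono_tags) abs_le_square_iff of_int_1 of_int_abs of_int_add of_int_le_iff add_nonneg_nonneg zero_le_one abs_of_nonneg)
    then have "(of_int L + 1)^2 * pp N n z \<le> (of_int z)^2 * pp N n z" by (rule mult_right_mono) (rule pp_nonneg)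
    then show "pp N n z \<le> (of_int z)^2 * pp N n z / (of_int L + 1)^2" using Lp by (simp add: field_simps)
  qed
  also have "\<dots> \<le> (\<Sum>z\<in>{-K..K}. (of_int z)^2 * pp N n z / (of_int L + 1)^2)"
    by (rule sum_mono2) (auto intro!: divide_nonneg_nonneg mult_nonneg_nonneg pp_nonneg)
  also have "\<dots> = 2 * rr N * real n / (of_int L + 1)^2" using var by (simp add: sum_divide_distrib[symmetric])
  finally show ?thesis using split mass by simp
qed

lemma mm_mono: "K \<le> L \<Longrightarrow> mm N n K \<le> mm N n L"
  unfolding mm_def by (rule sum_mono2) (auto simp: pp_nonneg)

definition cmass :: "real \<Rightarrow> real" where "cmass T = 1 / (2 * (8 * sqrt T + 3))"

lemma cmass_pos: "T \<ge> 0 \<Longrightarrow> cmass T > 0"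
proof -
  assume "T \<ge> 0"
  then have d: "2 * (8 * sqrt T + 3) > 0" by (simp add: algebra_simps add_pos_nonneg)
  show ?thesis unfolding cmass_def by (rule divide_pos_pos) (use d in auto)
qed
lemma cmass_le: "T \<ge> 0 \<Longrightarrow> cmass T \<le> 1/6"
proof -
  assume "T \<ge> 0"
  then have "2 * (8 * sqrt T + 3) \<ge> 6" by (simp add: algebra_simps)
  then show ?thesis unfolding cmass_def by (intro frac_le) auto
qed

lemma mass_lb:
  assumes N: "N \<ge> 1" and T: "T > 0" and rn: "rr N * real n \<le> 3 * real N ^ 2 * T"
  shows "mm N n (int (N div 2)) \<ge> cmass T"
proof -
  define K where "K = int (N div 2)"
  define L where "L = \<lceil>4 * real N * sqrt T\<rceil>"
  define c where "c = cmass T"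
  have c: "c \<le> 1/2" "c > 0" using cmass_le[of T] cmass_pos[of T] T by (simp_all add: c_def)
  have K0: "K \<ge> 0" by (simp add: K_def)
  have K2: "2 * real_of_int K + 1 \<ge> real N" unfolding K_def by linarith
  have L4: "real_of_int L \<ge> 4 * real N * sqrt T" unfolding L_def by (rule le_of_int_ceiling)
  have L0: "L \<ge> 0" using L4 T by (smt (verit) mult_nonneg_nonneg of_int_0_le_iff of_nat_0_le_iff real_sqrt_ge_zero)
  have Lup: "real_of_int L \<le> 4 * real N * sqrt T + 1" unfolding L_def by linarith
  have mL: "mm N n L \<ge> 1/2"
  proof -
    have sq: "(of_int L + 1)^2 \<ge> 16 * real N ^ 2 * T"
    proof -
      have "4 * real N * sqrt T \<le> of_int L + 1" using L4 by simp
      then have "(4 * real N * sqrt T)^2 \<le> (of_int L + 1)^2" by (rule power_mono) (use T in simp)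
      then show ?thesis using T by (simp add: power_mult_distrib)
    qed
    have pos: "(of_int L + 1 :: real)^2 > 0" using L0 by simp
    have "2 * rr N * real n / (of_int L + 1)^2 \<le> 1/2"
    proof -
      have "2 * rr N * real n \<le> 6 * real N ^ 2 * T" using rn by linarith
      also have "\<dots> \<le> 1/2 * (of_int L + 1)^2"
      proof -
        have "real N ^ 2 * T \<ge> 0" using T by simp
        then show ?thesis using sq by linarith
      qed
      finally show ?thesis using pos by (simp add: field_simps)
    qed
    then show ?thesis using mm_cheb[OF L0, of N n] by simp
  qed
  show ?thesis
  proof (cases "K \<le> L")
    case True
    have "(2 * of_int L + 1) * mm N n K \<ge> (2 * of_int K + 1) * mm N n L" by (rule mm_ratio[OF N K0 True])
    also have "(2 * of_int K + 1) * mm N n L \<ge> real N * (1/2)"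
      using K2 mL by (intro mult_mono) (auto simp: K0)
    finally have a: "(2 * of_int L + 1) * mm N n K \<ge> real N / 2" by simp
    have b: "2 * of_int L + 1 \<le> real N * (8 * sqrt T + 3)"
    proof -
      have "2 * of_int L + 1 \<le> 8 * real N * sqrt T + 3" using Lup by simp
      also have "\<dots> \<le> real N * (8 * sqrt T + 3)" using N by (simp add: algebra_simps)
      finally show ?thesis .
    qed
    have Lp: "(2 * of_int L + 1 :: real) > 0" using L0 by simp
    have "mm N n K \<ge> real N / 2 / (2 * of_int L + 1)" using a Lp by (simp add: field_simps)
    moreover have "real N / 2 / (2 * of_int L + 1) \<ge> real N / 2 / (real N * (8 * sqrt T + 3))"
      using b Lp N by (intro divide_left_mono) auto
    moreover have "real N / 2 / (real N * (8 * sqrt T + 3)) = cmass T" using N by (simp add: cmass_def)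
    ultimately show ?thesis by (simp add: K_def)
  next
    case False
    then have "mm N n K \<ge> mm N n L" by (intro mm_mono) simp
    then show ?thesis using mL c by (simp add: K_def c_def)
  qed
qed

lemma F_diff: "F N m x - F N m (x - int y) = (\<Sum>j<y. pp N m (x - int j))"
proof (induction y)
  case 0 then show ?case by simp
next
  case (Suc y)
  have "F N m (x - int y) - F N m (x - int (Suc y)) = pp N m (x - int y)" by (simp add: pp_def algebra_simps)
  then show ?case using Suc.IH by simp
qed

lemma deficit:
  assumes K: "K \<ge> 0" "int y + K \<le> int N + 1" "K \<le> int N"
  shows "(\<Sum>i\<in>{-int N..int N}. F N n (i - int y)) \<le> real N + 1 - real y * mm N n K"
proof -
  have "(\<Sum>i\<in>{-int N..int N}. F N n (i - int y)) = (\<Sum>i\<in>{-int N..int N}. F N n i) - (\<Sum>i\<in>{-int N..int N}. \<Sum>j<y. pp N n (i - int j))"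
    by (simp add: F_diff[symmetric] sum_subtractf)
  also have "(\<Sum>i\<in>{-int N..int N}. \<Sum>j<y. pp N n (i - int j)) = (\<Sum>j<y. \<Sum>i\<in>{-int N..int N}. pp N n (i - int j))"
    by (rule sum.swap)
  also have "(\<Sum>j<y. \<Sum>i\<in>{-int N..int N}. pp N n (i - int j)) \<ge> (\<Sum>j<y. mm N n K)"
  proof (rule sum_mono)
    fix j assume j: "j \<in> {..<y}"
    have "mm N n K = (\<Sum>i\<in>{int j - K..int j + K}. pp N n (i - int j))"
      unfolding mm_def by (rule sum.reindex_bij_witness[of _ "\<lambda>i. i - int j" "\<lambda>z. z + int j"]) auto
    also have "\<dots> \<le> (\<Sum>i\<in>{-int N..int N}. pp N n (i - int j))"
      using j K by (intro sum_mono2) (auto simp: pp_nonneg)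
    finally show "mm N n K \<le> (\<Sum>i\<in>{-int N..int N}. pp N n (i - int j))" .
  qed
  moreover have "(\<Sum>i\<in>{-int N..int N}. F N n i) \<le> real N + 1" using S0_bounds[of N n] by simp
  ultimately show ?thesis by simp
qed



lemma Inv_ord: "Inv N s \<Longrightarrow> i \<in> labels N \<Longrightarrow> j \<in> labels N \<Longrightarrow> i \<le> j \<Longrightarrow> fst s i \<le> fst s j"
  unfolding Inv_def by (cases "i = j") (auto simp: less_le)

lemma rr_n_le:
  assumes n: "real n \<le> 2 * exp 1 * (unif_rate N * (real N ^ 2 * T))"
  shows "rr N * real n \<le> 3 * real N ^ 2 * T \<or> T < 0"
proof (cases "T < 0")
  case False
  have "rr N * real n \<le> rr N * (2 * exp 1 * (unif_rate N * (real N ^ 2 * T)))"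
    by (rule mult_left_mono[OF n]) (simp add: less_imp_le rr_pos)
  also have "\<dots> = exp 1 * (real N ^ 2 * T)" by (simp add: rr_def unif_rate_def field_simps)
  also have "\<dots> \<le> 3 * (real N ^ 2 * T)" using False exp_le by (intro mult_right_mono) auto
  finally show ?thesis by simp
qed simp

lemma g0_count:
  assumes I: "Inv N s" and S: "S \<subseteq> labels N" "card S = N + 1" and one: "\<And>i. i \<in> S \<Longrightarrow> h (fst s i) \<ge> 0"
  shows "Lin N (\<lambda>x. g0 (h x)) s \<ge> real N + 1"
proof -
  have "real N + 1 = (\<Sum>i\<in>S. g0 (h (fst s i)))" using S one by (simp add: g0_def)
  also have "\<dots> \<le> (\<Sum>i\<in>labels N. g0 (h (fst s i)))" using S by (intro sum_mono2) (auto simp: g0_def)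
  finally show ?thesis by (simp add: Lin_def)
qed

lemma X_small_n:
  assumes N: "N \<ge> 4" and T: "T > 0" and a: "0 \<le> a" "a \<le> 1/4"
    and n: "real n \<le> 2 * exp 1 * (unif_rate N * (real N ^ 2 * T))"
  shows "measure_pmf.prob (iter_law N n) {s. \<bar>real_of_int (fst s 0)\<bar> / real N \<ge> a}
     \<le> 2 * exp (- (a^2 * cmass T ^ 2 / (8 * kap T)) * real N)"
proof -
  define \<kappa> where "\<kappa> = kap T"
  define cm where "cm = cmass T"
  define \<theta> where "\<theta> = a * cm / (4 * \<kappa>)"
  define y where "y = nat \<lceil>a * real N\<rceil>"
  define K where "K = int (N div 2)"
  define Sy where "Sy = (\<Sum>i\<in>{-int N..int N}. F N n (i - int y))"
  define V where "V = 6 * sqrt (1 + rr N * n / 2)"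
  have N1: "N \<ge> 1" using N by simp
  have k6: "\<kappa> \<ge> 6" using kap_ge T by (simp add: \<kappa>_def)
  have cm: "0 < cm" "cm \<le> 1/6" using cmass_pos cmass_le T by (simp_all add: cm_def less_imp_le)
  have th0: "\<theta> \<ge> 0" using a k6 cm by (simp add: \<theta>_def)
  have th1: "\<theta> \<le> 1/4"
  proof -
    have "a * cm \<le> 1 * 1" using a cm by (intro mult_mono) auto
    then show ?thesis using k6 by (simp add: \<theta>_def field_simps)
  qed
  have eth: "exp \<theta> \<le> 2"
  proof -
    have "exp \<theta> \<le> 1 + \<theta> + \<theta>^2" by (rule exp_bound[OF th0]) (use th1 in simp)
    moreover have "\<theta>^2 \<le> \<theta>" using th0 th1 by (simp add: power2_eq_square mult_left_le_one_le)
    ultimately show ?thesis using th1 by linarith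
  qed
  have Vb: "V \<le> \<kappa> * real N" using rr_n_bound[OF N1 T n] by (simp add: V_def \<kappa>_def)
  have an: "a * real N \<ge> 0" using a by simp
  have c0: "\<lceil>a * real N\<rceil> \<ge> 0" using an by simp
  have yr: "real y = of_int \<lceil>a * real N\<rceil>" unfolding y_def using c0 by simp
  have yge: "real y \<ge> a * real N" unfolding yr by (rule le_of_int_ceiling)
  have yle: "real y \<le> a * real N + 1" unfolding yr by (rule of_int_ceiling_le_add_one)
  have def: "Sy \<le> real N + 1 - real y * cm"
  proof -
    have c1: "int y + K \<le> int N + 1"
    proof -
      have "real y + real (N div 2) \<le> real N + 1"
      proof -
        have "real (N div 2) \<le> real N / 2" by linarith
        moreover have "a * real N \<le> 1/4 * real N" using a by (intro mult_right_mono) auto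
        ultimately show ?thesis using yle by simp
      qed
      then show ?thesis by (simp add: K_def)
    qed
    have "Sy \<le> real N + 1 - real y * mm N n K" unfolding Sy_def by (rule deficit) (use c1 in \<open>auto simp: K_def\<close>)
    moreover have "mm N n K \<ge> cm"
      using mass_lb[OF N1 T, of n] rr_n_le[OF n] T by (auto simp: K_def cm_def)
    ultimately show ?thesis by (smt (verit) mult_left_mono of_nat_0_le_iff)
  qed
  define A :: "sstate set" where "A = {s. \<bar>real_of_int (fst s 0)\<bar> / real N \<ge> a}"
  have Np: "real N > 0" using N by simp
  have A_abs: "s \<in> A \<Longrightarrow> \<bar>real_of_int (fst s 0)\<bar> \<ge> a * real N" for s
    using Np by (simp add: A_def field_simps)
  have zl: "0 \<in> labels N" by (simp add: labels_def)
  have P1: "measure_pmf.prob (iter_law N n) {s\<in>A. fst s 0 \<ge> 0} \<le> exp (- \<theta> * (real N + 1)) * exp (\<theta> * Sy + \<theta>^2 * exp \<theta> * V)"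
  proof (rule markov_exp[OF th0])
    have "Lin N (\<lambda>x. F N n (1 * x - int y)) init_state = Sy" by (simp add: Lin_init Sy_def)
    then show "(\<integral>\<^sup>+s. ennreal (exp (\<theta> * Lin N (\<lambda>x. g0 (1 * x - int y)) s)) \<partial>iter_law N n) \<le> ennreal (exp (\<theta> * Sy + \<theta>^2 * exp \<theta> * V))"
      using gen_iter[OF N1, where \<sigma>=1 and \<theta>=\<theta> and y="int y" and n=n] th0 by (simp add: V_def)
    show "\<forall>s\<in>set_pmf (iter_law N n). s \<in> {s\<in>A. fst s 0 \<ge> 0} \<longrightarrow> real N + 1 \<le> Lin N (\<lambda>x. g0 (1 * x - int y)) s"
    proof (intro ballI impI)
      fix s assume s: "s \<in> set_pmf (iter_law N n)" "s \<in> {s\<in>A. fst s 0 \<ge> 0}"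
      have I: "Inv N s" by (rule Inv_iter[OF s(1)])
      have "\<bar>real_of_int (fst s 0)\<bar> \<ge> a * real N" "fst s 0 \<ge> 0" using A_abs[of s] s(2) by simp_all
      then have "a * real N \<le> real_of_int (fst s 0)" by simp
      then have "\<lceil>a * real N\<rceil> \<le> fst s 0" by (simp add: ceiling_le_iff)
      then have X: "fst s 0 \<ge> int y" using c0 by (simp add: y_def)
      show "real N + 1 \<le> Lin N (\<lambda>x. g0 (1 * x - int y)) s"
      proof (rule g0_count[OF I, of "{0..int N}"])
        show "{0..int N} \<subseteq> labels N" by (auto simp: labels_def)
        show "card {0..int N} = N + 1" by simp
        fix i assume "i \<in> {0..int N}"
        then have "fst s 0 \<le> fst s i" using Inv_ord[OF I zl] by (auto simp: labels_def)
        then show "1 * fst s i - int y \<ge> 0" using X by simp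
      qed
    qed
  qed simp
  have P2: "measure_pmf.prob (iter_law N n) {s\<in>A. fst s 0 < 0} \<le> exp (- \<theta> * (real N + 1)) * exp (\<theta> * Sy + \<theta>^2 * exp \<theta> * V)"
  proof (rule markov_exp[OF th0])
    have "Lin N (\<lambda>x. F N n (-1 * x - int y)) init_state = (\<Sum>i\<in>{-int N..int N}. F N n (- i - int y))"
      by (simp add: Lin_init)
    also have "\<dots> = Sy" unfolding Sy_def
      by (rule sum.reindex_bij_witness[of _ "\<lambda>i. - i" "\<lambda>i. - i"]) auto
    finally have e: "Lin N (\<lambda>x. F N n (-1 * x - int y)) init_state = Sy" .
    show "(\<integral>\<^sup>+s. ennreal (exp (\<theta> * Lin N (\<lambda>x. g0 (-1 * x - int y)) s)) \<partial>iter_law N n) \<le> ennreal (exp (\<theta> * Sy + \<theta>^2 * exp \<theta> * V))"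
      using gen_iter[OF N1, where \<sigma>="-1" and \<theta>=\<theta> and y="int y" and n=n] th0 e by (simp add: V_def)
    show "\<forall>s\<in>set_pmf (iter_law N n). s \<in> {s\<in>A. fst s 0 < 0} \<longrightarrow> real N + 1 \<le> Lin N (\<lambda>x. g0 (-1 * x - int y)) s"
    proof (intro ballI impI)
      fix s assume s: "s \<in> set_pmf (iter_law N n)" "s \<in> {s\<in>A. fst s 0 < 0}"
      have I: "Inv N s" by (rule Inv_iter[OF s(1)])
      have "\<bar>real_of_int (fst s 0)\<bar> \<ge> a * real N" "fst s 0 < 0" using A_abs[of s] s(2) by simp_all
      then have "- real_of_int (fst s 0) \<ge> a * real N" by simp
      then have "a * real N \<le> real_of_int (- fst s 0)" by simp
      then have "\<lceil>a * real N\<rceil> \<le> - fst s 0" by (simp add: ceiling_le_iff)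
      then have X: "- fst s 0 \<ge> int y" using c0 by (simp add: y_def)
      show "real N + 1 \<le> Lin N (\<lambda>x. g0 (-1 * x - int y)) s"
      proof (rule g0_count[OF I, of "{-int N..0}"])
        show "{-int N..0} \<subseteq> labels N" by (auto simp: labels_def)
        show "card {-int N..0} = N + 1" by simp
        fix i assume "i \<in> {-int N..0}"
        then have "fst s i \<le> fst s 0" using Inv_ord[OF I _ zl] by (auto simp: labels_def)
        then show "-1 * fst s i - int y \<ge> 0" using X by simp
      qed
    qed
  qed simp
  have "measure_pmf.prob (iter_law N n) A \<le> measure_pmf.prob (iter_law N n) {s\<in>A. fst s 0 \<ge> 0} + measure_pmf.prob (iter_law N n) {s\<in>A. fst s 0 < 0}"
  proof -
    have e: "A = {s\<in>A. fst s 0 \<ge> 0} \<union> {s\<in>A. fst s 0 < 0}" by auto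
    show ?thesis by (subst e) (rule measure_Un_le, simp_all)
  qed
  also have "\<dots> \<le> 2 * (exp (- \<theta> * (real N + 1)) * exp (\<theta> * Sy + \<theta>^2 * exp \<theta> * V))" using P1 P2 by simp
  also have "exp (- \<theta> * (real N + 1)) * exp (\<theta> * Sy + \<theta>^2 * exp \<theta> * V) \<le> exp (- (a^2 * cm^2 / (8 * \<kappa>)) * real N)"
  proof -
    have "- \<theta> * (real N + 1) + (\<theta> * Sy + \<theta>^2 * exp \<theta> * V) \<le> - \<theta> * (real y * cm) + \<theta>^2 * 2 * (\<kappa> * real N)"
    proof -
      have "\<theta> * Sy \<le> \<theta> * (real N + 1 - real y * cm)" by (rule mult_left_mono[OF def th0])
      moreover have "\<theta>^2 * exp \<theta> * V \<le> \<theta>^2 * 2 * (\<kappa> * real N)"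
        by (rule mult_mono) (use eth Vb rr_pos[of N] in \<open>auto intro: mult_left_mono add_nonneg_nonneg simp: V_def\<close>)
      ultimately show ?thesis by (simp add: algebra_simps)
    qed
    also have "\<dots> \<le> - \<theta> * (a * real N * cm) + \<theta>^2 * 2 * (\<kappa> * real N)"
    proof -
      have "a * real N * cm \<le> real y * cm" using yge cm by (intro mult_right_mono) auto
      then show ?thesis using th0 by (simp add: mult_left_mono)
    qed
    also have "\<dots> = - (a^2 * cm^2 / (8 * \<kappa>)) * real N" using k6 by (simp add: \<theta>_def power2_eq_square field_simps)
    finally show ?thesis by (simp add: exp_add[symmetric])
  qed
  finally show ?thesis by (simp add: A_def cm_def \<kappa>_def)
qed



definition gpos :: "nat \<Rightarrow> int \<Rightarrow> int \<Rightarrow> real" where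
  "gpos N \<sigma> x = max 0 (real_of_int (\<sigma> * x)) / real N"

definition HH :: "nat \<Rightarrow> int \<Rightarrow> nat \<Rightarrow> int \<Rightarrow> real" where
  "HH N \<sigma> m = (Pr N ^^ m) (gpos N \<sigma>)"

lemma HH_Suc: "HH N \<sigma> (Suc m) = Pr N (HH N \<sigma> m)" by (simp add: HH_def)
lemma HH_0: "HH N \<sigma> 0 = gpos N \<sigma>" by (simp add: HH_def)

lemma Pr_abs_le: "(\<And>x. \<bar>f x\<bar> \<le> c) \<Longrightarrow> \<bar>Pr N f x\<bar> \<le> c"
proof -
  assume f: "\<And>x. \<bar>f x\<bar> \<le> c"
  have "Pr N f x \<le> c" by (rule Pr_le) (use f in \<open>simp add: abs_le_iff\<close>)
  moreover have "Pr N (\<lambda>x. - f x) x \<le> c" by (rule Pr_le) (use f in \<open>simp add: abs_le_iff\<close>)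
  moreover have "Pr N (\<lambda>x. - f x) x = - Pr N f x" by (simp add: Pr_def algebra_simps)
  ultimately show ?thesis by simp
qed

lemma Pr_grad: "Pr N f (x+1) - Pr N f x = Pr N (\<lambda>x. f (x+1) - f x) x"
  by (simp add: Pr_def algebra_simps)

lemma HH_grad:
  assumes s: "\<sigma> \<in> {1, -1}" and N: "N \<ge> 1"
  shows "\<bar>HH N \<sigma> m (x+1) - HH N \<sigma> m x\<bar> \<le> 1 / real N"
proof (induction m arbitrary: x)
  case 0
  have "\<bar>max 0 (real_of_int (\<sigma> * (x+1))) - max 0 (real_of_int (\<sigma> * x))\<bar> \<le> 1"
    using s by (auto simp: algebra_simps)
  then have "\<bar>max 0 (real_of_int (\<sigma> * (x+1))) - max 0 (real_of_int (\<sigma> * x))\<bar> / real N \<le> 1 / real N"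
    by (simp add: divide_right_mono)
  then show ?case by (simp add: HH_0 gpos_def diff_divide_distrib[symmetric])
next
  case (Suc m)
  show ?case unfolding HH_Suc Pr_grad by (rule Pr_abs_le) (rule Suc.IH)
qed

lemma HH_nonneg: "HH N \<sigma> m x \<ge> 0"
  by (induction m arbitrary: x) (auto simp: HH_0 HH_Suc gpos_def intro: Pr_nonneg)

lemma HH_upper:
  assumes s: "\<sigma> \<in> {1, -1}" and N: "N \<ge> 1"
  shows "HH N \<sigma> m x \<le> ((of_int x)^2 + (real N)^2) / (2 * (real N)^2) + real m * rr N / (real N)^2"
proof (induction m arbitrary: x)
  case 0
  have Np: "real N > 0" using N by simp
  have "max 0 (real_of_int (\<sigma> * x)) \<le> \<bar>of_int x\<bar>" using s by auto
  moreover have "2 * real N * \<bar>of_int x\<bar> \<le> (of_int x)^2 + (real N)^2"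
  proof -
    have "0 \<le> (\<bar>of_int x\<bar> - real N)^2" by simp
    then show ?thesis by (simp add: power2_eq_square algebra_simps)
  qed
  ultimately have "2 * real N * max 0 (real_of_int (\<sigma> * x)) \<le> (of_int x)^2 + (real N)^2"
    using Np by (smt (verit) mult_left_mono)
  then show ?case using Np by (simp add: HH_0 gpos_def field_simps power2_eq_square)
next
  case (Suc m)
  define w where "w x = ((of_int x)^2 + (real N)^2) / (2 * (real N)^2) + real m * rr N / (real N)^2" for x :: int
  have "HH N \<sigma> (Suc m) x = Pr N (HH N \<sigma> m) x" by (simp add: HH_Suc)
  also have "\<dots> \<le> Pr N w x" by (rule Pr_mono) (use Suc.IH in \<open>simp add: w_def\<close>)
  also have "Pr N w x = w x + rr N / (real N)^2"
    using N by (simp add: Pr_def w_def power2_eq_square field_simps)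
  finally show ?case by (simp add: w_def algebra_simps add_divide_distrib)
qed

lemma gpos_iter:
  assumes s: "\<sigma> \<in> {1, -1}" and N: "N \<ge> 1"
  shows "(\<integral>\<^sup>+st. ennreal (exp (\<theta> * Lin N (gpos N \<sigma>) st)) \<partial>iter_law N n)
     \<le> ennreal (exp (\<theta> * Lin N (HH N \<sigma> n) init_state + \<theta>^2 * exp (\<bar>\<theta>\<bar> * (1 / real N)) / 2 * (real n * (1 / real N)^2)))"
proof -
  define hs where "hs k = HH N \<sigma> (n - k)" for k
  have hk: "\<forall>k<n. hs k = Pr N (hs (Suc k))"
  proof (intro allI impI)
    fix k assume "k < n"
    then have "n - k = Suc (n - Suc k)" by simp
    then show "hs k = Pr N (hs (Suc k))" by (simp add: hs_def HH_Suc)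
  qed
  have G: "\<forall>k<n. \<forall>x. \<bar>hs (Suc k) (x+1) - hs (Suc k) x\<bar> \<le> 1 / real N"
    using HH_grad[OF s N] by (simp add: hs_def)
  have Q: "\<forall>k<n. \<forall>st. Inv N st \<longrightarrow> Qs N (hs (Suc k)) st \<le> (1 / real N)^2"
    using G Qs_crude by blast
  have "(\<integral>\<^sup>+st. ennreal (exp (\<theta> * Lin N (hs n) st)) \<partial>iter_law N n)
     \<le> ennreal (exp (\<theta> * Lin N (hs 0) init_state + \<theta>^2 * exp (\<bar>\<theta>\<bar> * (1 / real N)) / 2 * (\<Sum>j<n. (1 / real N)^2)))"
    by (rule iter_bound[where hs=hs]) (use hk Q G in auto)
  then show ?thesis by (simp add: hs_def HH_0)
qed

lemma Lin_sub_bound: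
  assumes "S \<subseteq> labels N" "\<And>x. h x \<ge> 0" "\<And>i. i \<in> S \<Longrightarrow> h (fst s i) \<ge> c"
  shows "Lin N h s \<ge> real (card S) * c"
proof -
  have "real (card S) * c = (\<Sum>i\<in>S. c)" by simp
  also have "\<dots> \<le> (\<Sum>i\<in>S. h (fst s i))" by (rule sum_mono) (rule assms(3))
  also have "\<dots> \<le> (\<Sum>i\<in>labels N. h (fst s i))" using assms by (intro sum_mono2) auto
  finally show ?thesis by (simp add: Lin_def)
qed

lemma HH_init:
  assumes s: "\<sigma> \<in> {1, -1}" and N: "N \<ge> 1" and T: "T > 0"
    and n: "real n \<le> 2 * exp 1 * (unif_rate N * (real N ^ 2 * T))"
  shows "Lin N (HH N \<sigma> n) init_state \<le> 3 * real N * (1 + 3 * T)"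
proof -
  have Np: "real N > 0" using N by simp
  have rn: "rr N * real n \<le> 3 * real N ^ 2 * T" using rr_n_le[OF n] T by auto
  have b: "HH N \<sigma> n i \<le> 1 + 3 * T" if i: "i \<in> {-int N..int N}" for i
  proof -
    have "(of_int i)^2 \<le> (real N)^2"
    proof -
      have "\<bar>of_int i\<bar> \<le> real N" using i by auto
      then show ?thesis by (metis abs_le_square_iff of_nat_0_le_iff abs_of_nonneg)
    qed
    then have "((of_int i)^2 + (real N)^2) / (2 * (real N)^2) \<le> 1" using Np by (simp add: field_simps)
    moreover have "real n * rr N / (real N)^2 \<le> 3 * T" using rn Np by (simp add: field_simps)
    ultimately show ?thesis using HH_upper[OF s N, of n i] by simp
  qed
  have "Lin N (HH N \<sigma> n) init_state \<le> (\<Sum>i\<in>{-int N..int N}. 1 + 3 * T)"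
    unfolding Lin_init by (rule sum_mono) (rule b)
  also have "\<dots> = (2 * real N + 1) * (1 + 3 * T)" by simp
  also have "\<dots> \<le> 3 * real N * (1 + 3 * T)" using N T by (intro mult_right_mono) auto
  finally show ?thesis .
qed

lemma X_large_tail:
  assumes s: "\<sigma> \<in> {1, -1}" and N: "N \<ge> 1" and T: "T > 0" and a: "a \<ge> 6 * (1 + 3 * T)"
    and NN: "real N \<ge> a / (36 * T)"
    and n: "real n \<le> 2 * exp 1 * (unif_rate N * (real N ^ 2 * T))"
    and B: "\<forall>st\<in>set_pmf (iter_law N n). st \<in> A \<longrightarrow> Lin N (gpos N \<sigma>) st \<ge> (real N + 1) * a"
  shows "measure_pmf.prob (iter_law N n) A \<le> exp (- (a^2 / (288 * T)) * real N)"
proof -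
  define \<theta> where "\<theta> = a / (72 * T)"
  define S where "S = Lin N (HH N \<sigma> n) init_state"
  have Np: "real N > 0" using N by simp
  have a0: "a \<ge> 0" using a T by (smt (verit) mult_nonneg_nonneg)
  have th0: "\<theta> \<ge> 0" using a0 T by (simp add: \<theta>_def)
  have thN: "\<theta> / real N \<le> 1/2"
  proof -
    have "a / (36 * T) = 2 * \<theta>" by (simp add: \<theta>_def)
    then have "2 * \<theta> \<le> real N" using NN by simp
    then show ?thesis using Np by (simp add: field_simps)
  qed
  have eth: "exp (\<bar>\<theta>\<bar> * (1 / real N)) \<le> 2"
  proof -
    define x where "x = \<theta> / real N"
    have x0: "0 \<le> x" using th0 Np by (simp add: x_def)
    have x1: "x \<le> 1/2" using thN by (simp add: x_def)
    have "exp x \<le> 1 + x + x^2" by (rule exp_bound[OF x0]) (use x1 in simp)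
    moreover have "x * x \<le> x" by (rule mult_left_le_one_le[OF x0 x0]) (use x1 in simp)
    ultimately have "exp x \<le> 2" using x1 by (simp add: power2_eq_square)
    moreover have "\<bar>\<theta>\<bar> * (1 / real N) = x" using th0 by (simp add: x_def)
    ultimately show ?thesis by simp
  qed
  have nN: "real n * (1 / real N)^2 \<le> 18 * real N * T"
  proof -
    have "real n \<le> 2 * exp 1 * ((2 * real N + 1) * (real N ^ 2 * T))" using n by (simp add: unif_rate_def)
    also have "\<dots> \<le> 2 * 3 * ((3 * real N) * (real N ^ 2 * T))"
      using exp_le T N by (intro mult_mono) auto
    finally have "real n \<le> 18 * real N * T * real N ^ 2" by (simp add: algebra_simps)
    then show ?thesis using Np by (simp add: field_simps power2_eq_square)
  qed
  have Sb: "S \<le> 3 * real N * (1 + 3 * T)" using HH_init[OF s N T n] by (simp add: S_def)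
  have "measure_pmf.prob (iter_law N n) A \<le> exp (- \<theta> * ((real N + 1) * a)) * exp (\<theta> * S + \<theta>^2 * exp (\<bar>\<theta>\<bar> * (1 / real N)) / 2 * (real n * (1 / real N)^2))"
    by (rule markov_exp[OF th0 _ B]) (use gpos_iter[OF s N, where \<theta>=\<theta> and n=n] in \<open>simp_all add: S_def\<close>)
  also have "\<dots> \<le> exp (- (a^2 / (288 * T)) * real N)"
  proof -
    have v: "\<theta>^2 * exp (\<bar>\<theta>\<bar> * (1 / real N)) / 2 * (real n * (1 / real N)^2) \<le> \<theta>^2 * 18 * real N * T"
    proof -
      have h1: "\<theta>^2 * exp (\<bar>\<theta>\<bar> * (1 / real N)) / 2 \<le> \<theta>^2 * 2 / 2" using eth by (intro divide_right_mono mult_left_mono) auto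
      have "\<theta>^2 * exp (\<bar>\<theta>\<bar> * (1 / real N)) / 2 * (real n * (1 / real N)^2) \<le> \<theta>^2 * 2 / 2 * (18 * real N * T)"
        by (rule mult_mono[OF h1 nN]) auto
      then have "\<theta>^2 * exp (\<bar>\<theta>\<bar> * (1 / real N)) / 2 * (real n * (1 / real N)^2) \<le> \<theta>^2 * (18 * real N * T)"
        by simp
      then show ?thesis by (simp add: algebra_simps)
    qed
    have m: "- \<theta> * ((real N + 1) * a) + \<theta> * S \<le> - \<theta> * (a * real N / 2)"
    proof -
      have "6 * (1 + 3 * T) * real N \<le> a * real N" using a Np by (intro mult_right_mono) auto
      then have "3 * real N * (1 + 3 * T) \<le> a * real N / 2" by (simp add: algebra_simps)
      then have "(real N + 1) * a - S \<ge> a * real N / 2" using Sb a0 by (simp add: algebra_simps)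
      then have "\<theta> * ((real N + 1) * a - S) \<ge> \<theta> * (a * real N / 2)" by (rule mult_left_mono[OF _ th0])
      then show ?thesis by (simp add: algebra_simps)
    qed
    have "- \<theta> * ((real N + 1) * a) + (\<theta> * S + \<theta>^2 * exp (\<bar>\<theta>\<bar> * (1 / real N)) / 2 * (real n * (1 / real N)^2))
        \<le> - \<theta> * (a * real N / 2) + \<theta>^2 * 18 * real N * T" using v m by linarith
    also have "\<dots> = - (a^2 / (288 * T)) * real N" using T by (simp add: \<theta>_def power2_eq_square field_simps)
    finally show ?thesis by (simp add: exp_add[symmetric])
  qed
  finally show ?thesis .
qed

lemma X_large_n:
  assumes N: "N \<ge> 1" and T: "T > 0" and a: "a \<ge> 6 * (1 + 3 * T)"
    and NN: "real N \<ge> a / (36 * T)"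
    and n: "real n \<le> 2 * exp 1 * (unif_rate N * (real N ^ 2 * T))"
  shows "measure_pmf.prob (iter_law N n) {s. \<bar>real_of_int (fst s 0)\<bar> / real N \<ge> a}
     \<le> 2 * exp (- (a^2 / (288 * T)) * real N)"
proof -
  define A :: "sstate set" where "A = {s. \<bar>real_of_int (fst s 0)\<bar> / real N \<ge> a}"
  have Np: "real N > 0" using N by simp
  have a0: "a \<ge> 0" using a T by (smt (verit) mult_nonneg_nonneg)
  have A_abs: "s \<in> A \<Longrightarrow> \<bar>real_of_int (fst s 0)\<bar> \<ge> a * real N" for s
    using Np by (simp add: A_def field_simps)
  have zl: "0 \<in> labels N" by (simp add: labels_def)
  have gp0: "gpos N \<sigma> x \<ge> 0" for \<sigma> x by (simp add: gpos_def)
  have P1: "measure_pmf.prob (iter_law N n) {s\<in>A. fst s 0 \<ge> 0} \<le> exp (- (a^2 / (288 * T)) * real N)"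
  proof (rule X_large_tail[where \<sigma>=1, OF _ N T a NN n])
    show "\<forall>st\<in>set_pmf (iter_law N n). st \<in> {s\<in>A. fst s 0 \<ge> 0} \<longrightarrow> Lin N (gpos N 1) st \<ge> (real N + 1) * a"
    proof (intro ballI impI)
      fix s assume s: "s \<in> set_pmf (iter_law N n)" "s \<in> {s\<in>A. fst s 0 \<ge> 0}"
      have I: "Inv N s" by (rule Inv_iter[OF s(1)])
      have "\<bar>real_of_int (fst s 0)\<bar> \<ge> a * real N" "fst s 0 \<ge> 0" using A_abs[of s] s(2) by simp_all
      then have X: "real_of_int (fst s 0) \<ge> a * real N" by simp
      have "Lin N (gpos N 1) s \<ge> real (card {0..int N}) * a"
      proof (rule Lin_sub_bound)
        show "{0..int N} \<subseteq> labels N" by (auto simp: labels_def)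
        fix i assume "i \<in> {0..int N}"
        then have "fst s 0 \<le> fst s i" using Inv_ord[OF I zl] by (auto simp: labels_def)
        then have "real_of_int (fst s i) \<ge> a * real N" using X by linarith
        then have "max 0 (real_of_int (fst s i)) \<ge> a * real N" by simp
        then show "gpos N 1 (fst s i) \<ge> a" using Np by (simp add: gpos_def field_simps)
      qed (rule gp0)
      then show "Lin N (gpos N 1) s \<ge> (real N + 1) * a" by simp
    qed
  qed simp
  have P2: "measure_pmf.prob (iter_law N n) {s\<in>A. fst s 0 < 0} \<le> exp (- (a^2 / (288 * T)) * real N)"
  proof (rule X_large_tail[where \<sigma>="-1", OF _ N T a NN n])
    show "\<forall>st\<in>set_pmf (iter_law N n). st \<in> {s\<in>A. fst s 0 < 0} \<longrightarrow> Lin N (gpos N (-1)) st \<ge> (real N + 1) * a"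
    proof (intro ballI impI)
      fix s assume s: "s \<in> set_pmf (iter_law N n)" "s \<in> {s\<in>A. fst s 0 < 0}"
      have I: "Inv N s" by (rule Inv_iter[OF s(1)])
      have "\<bar>real_of_int (fst s 0)\<bar> \<ge> a * real N" "fst s 0 < 0" using A_abs[of s] s(2) by simp_all
      then have X: "- real_of_int (fst s 0) \<ge> a * real N" by simp
      have "Lin N (gpos N (-1)) s \<ge> real (card {-int N..0}) * a"
      proof (rule Lin_sub_bound)
        show "{-int N..0} \<subseteq> labels N" by (auto simp: labels_def)
        fix i assume "i \<in> {-int N..0}"
        then have "fst s i \<le> fst s 0" using Inv_ord[OF I _ zl] by (auto simp: labels_def)
        then have "real_of_int (- fst s i) \<ge> a * real N" using X by linarith
        then have "max 0 (real_of_int (-1 * fst s i)) \<ge> a * real N" by simp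
        then show "gpos N (-1) (fst s i) \<ge> a" using Np by (simp add: gpos_def field_simps)
      qed (rule gp0)
      then show "Lin N (gpos N (-1)) s \<ge> (real N + 1) * a" by simp
    qed
  qed simp
  have "measure_pmf.prob (iter_law N n) A \<le> measure_pmf.prob (iter_law N n) {s\<in>A. fst s 0 \<ge> 0} + measure_pmf.prob (iter_law N n) {s\<in>A. fst s 0 < 0}"
  proof -
    have e: "A = {s\<in>A. fst s 0 \<ge> 0} \<union> {s\<in>A. fst s 0 < 0}" by auto
    show ?thesis by (subst e) (rule measure_Un_le, simp_all)
  qed
  also have "\<dots> \<le> 2 * exp (- (a^2 / (288 * T)) * real N)" using P1 P2 by simp
  finally show ?thesis by (simp add: A_def)
qed



lemma assemble:
  assumes T: "T > 0" and b: "\<beta> \<ge> 0"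
    and ev: "\<forall>\<^sub>F N in sequentially. \<forall>n. real n \<le> 2 * exp 1 * (unif_rate N * (real N ^ 2 * T))
                \<longrightarrow> measure_pmf.prob (iter_law N n) (E N) \<le> 2 * exp (- \<beta> * real N)"
  shows "limsup (\<lambda>N::nat. ereal (1 / real N) * eln (ssep_prob N (real N ^ 2 * T) (E N))) \<le> ereal (- \<beta>)"
proof (rule limsup_le_exp)
  show "\<forall>\<^sub>F N in sequentially. ssep_prob N (real N ^ 2 * T) (E N) \<le> 3 * exp (- \<beta> * real N)"
    using ev ev_real_ge[of "max 1 (\<beta> / T)"]
  proof eventually_elim
    case (elim N)
    have N1: "real N \<ge> 1" using elim(2) by simp
    have NT: "real N * T \<ge> \<beta>" using elim(2) T by (simp add: field_simps)
    have "ssep_prob N (real N ^ 2 * T) (E N) \<le> 2 * exp (- \<beta> * real N) + exp (- (unif_rate N * (real N ^ 2 * T)))"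
      unfolding ssep_prob_def
    proof (rule poisson_bound)
      show "unif_rate N * (real N ^ 2 * T) \<ge> 0" using T by (simp add: unif_rate_def)
    qed (use elim(1) b in auto)
    also have "exp (- (unif_rate N * (real N ^ 2 * T))) \<le> exp (- \<beta> * real N)"
    proof -
      have "\<beta> * real N \<le> real N * T * real N" using NT N1 by (intro mult_right_mono) auto
      also have "\<dots> \<le> unif_rate N * (real N ^ 2 * T)"
        using T N1 by (simp add: unif_rate_def power2_eq_square field_simps mult_right_mono)
      finally show ?thesis by simp
    qed
    finally show ?case by simp
  qed
qed simp

definition csm :: "real \<Rightarrow> real" where "csm T = cmass T ^ 2 / (8 * kap T)"
definition A0 :: "real \<Rightarrow> real" where "A0 T = 6 * (1 + 3 * T)"
definition cX :: "real \<Rightarrow> real" where "cX T = min (csm T / (16 * A0 T ^ 2)) (1 / (288 * T))"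

lemma csm_pos: "T > 0 \<Longrightarrow> csm T > 0"
  using cmass_pos[of T] kap_ge[of T] by (simp add: csm_def)
lemma A0_pos: "T > 0 \<Longrightarrow> A0 T \<ge> 6" by (simp add: A0_def)
lemma cX_pos: "T > 0 \<Longrightarrow> cX T > 0"
  using csm_pos[of T] A0_pos[of T] by (simp add: cX_def)

lemma X_part:
  assumes T: "T > 0" and a: "0 \<le> a"
  shows "limsup (\<lambda>N::nat. ereal (1 / real N) * eln (ssep_prob N (real N ^ 2 * T)
        {s. \<bar>real_of_int (fst s 0)\<bar> / real N \<ge> a})) \<le> ereal (- cX T * a ^ 2)"
proof -
  define E where "E b N = {s::sstate. \<bar>real_of_int (fst s 0)\<bar> / real N \<ge> b}" for b N
  have cs: "csm T > 0" by (rule csm_pos[OF T])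
  have A6: "A0 T \<ge> 6" by (rule A0_pos[OF T])
  have small: "limsup (\<lambda>N::nat. ereal (1 / real N) * eln (ssep_prob N (real N ^ 2 * T) (E b N))) \<le> ereal (- (b^2 * csm T))"
    if b: "0 \<le> b" "b \<le> 1/4" for b
  proof (rule assemble[OF T])
    show "b^2 * csm T \<ge> 0" using cs by simp
    show "\<forall>\<^sub>F N in sequentially. \<forall>n. real n \<le> 2 * exp 1 * (unif_rate N * (real N ^ 2 * T))
          \<longrightarrow> measure_pmf.prob (iter_law N n) (E b N) \<le> 2 * exp (- (b^2 * csm T) * real N)"
      using ev_real_ge[of 4]
    proof eventually_elim
      case (elim N)
      then have N4: "N \<ge> 4" by simp
      show ?case using X_small_n[OF N4 T b] by (simp add: E_def csm_def mult_ac)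
    qed
  qed
  show ?thesis
  proof (cases "a \<le> 1/4")
    case True
    have "limsup (\<lambda>N::nat. ereal (1 / real N) * eln (ssep_prob N (real N ^ 2 * T) (E a N))) \<le> ereal (- (a^2 * csm T))"
      by (rule small[OF a True])
    also have "ereal (- (a^2 * csm T)) \<le> ereal (- cX T * a ^ 2)"
    proof -
      have "cX T \<le> csm T / (16 * A0 T ^ 2)" by (simp add: cX_def)
      also have "\<dots> \<le> csm T"
      proof -
        have "A0 T ^ 2 \<ge> 6^2" using A6 by (intro power_mono) auto
        then have "16 * A0 T ^ 2 \<ge> 1" by simp
        then show ?thesis using cs by (simp add: divide_le_eq mult_le_cancel_left1)
      qed
      finally have "cX T * a^2 \<le> csm T * a^2" by (rule mult_right_mono) simp
      then show ?thesis by (simp add: mult_ac)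
    qed
    finally show ?thesis by (simp add: E_def)
  next
    case False
    show ?thesis
    proof (cases "a \<ge> A0 T")
      case True
      have "limsup (\<lambda>N::nat. ereal (1 / real N) * eln (ssep_prob N (real N ^ 2 * T) (E a N))) \<le> ereal (- (a^2 / (288 * T)))"
      proof (rule assemble[OF T])
        show "a^2 / (288 * T) \<ge> 0" using T by simp
        show "\<forall>\<^sub>F N in sequentially. \<forall>n. real n \<le> 2 * exp 1 * (unif_rate N * (real N ^ 2 * T))
            \<longrightarrow> measure_pmf.prob (iter_law N n) (E a N) \<le> 2 * exp (- (a^2 / (288 * T)) * real N)"
          using ev_real_ge[of "max 1 (a / (36 * T))"]
        proof eventually_elim
          case (elim N)
          then have N1: "N \<ge> 1" by simp
          have NN: "real N \<ge> a / (36 * T)" using elim by simp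
          have aa: "a \<ge> 6 * (1 + 3 * T)" using True by (simp add: A0_def)
          show ?case using X_large_n[OF N1 T aa NN] by (simp add: E_def)
        qed
      qed
      also have "ereal (- (a^2 / (288 * T))) \<le> ereal (- cX T * a ^ 2)"
      proof -
        have "cX T \<le> 1 / (288 * T)" by (simp add: cX_def)
        then have "cX T * a^2 \<le> 1 / (288 * T) * a^2" by (rule mult_right_mono) simp
        then show ?thesis by simp
      qed
      finally show ?thesis by (simp add: E_def)
    next
      case False2: False
      have mono: "ssep_prob N t (E a N) \<le> ssep_prob N t (E (1/4) N)" if t: "t \<ge> 0" for N t
      proof -
        have sub: "E a N \<subseteq> E (1/4) N" unfolding E_def
          by (rule Collect_mono) (use \<open>\<not> a \<le> 1/4\<close> in linarith)
        have pm: "measure_pmf.prob (iter_law N n) (E a N) \<le> measure_pmf.prob (iter_law N n) (E (1/4) N)" for n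
          by (rule measure_pmf.finite_measure_mono[OF sub]) simp
        have w0: "exp (- unif_rate N * t) * (unif_rate N * t) ^ n / fact n \<ge> 0" for n
          using t by (simp add: unif_rate_def)
        have sw: "summable (\<lambda>n. exp (- unif_rate N * t) * (unif_rate N * t) ^ n / fact n)"
        proof -
          have "summable (\<lambda>n. inverse (fact n) * (unif_rate N * t) ^ n * exp (- unif_rate N * t))"
            by (rule summable_mult2[OF summable_exp])
          then show ?thesis by (simp add: divide_inverse mult_ac)
        qed
        have cmp: "norm (exp (- unif_rate N * t) * (unif_rate N * t) ^ n / fact n * measure_pmf.prob (iter_law N n) B)
            \<le> exp (- unif_rate N * t) * (unif_rate N * t) ^ n / fact n" for n B
        proof -
          have "norm (exp (- unif_rate N * t) * (unif_rate N * t) ^ n / fact n * measure_pmf.prob (iter_law N n) B)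
              = exp (- unif_rate N * t) * (unif_rate N * t) ^ n / fact n * measure_pmf.prob (iter_law N n) B"
            using w0[of n] by (simp only: real_norm_def abs_mult abs_of_nonneg measure_nonneg)
          also have "\<dots> \<le> exp (- unif_rate N * t) * (unif_rate N * t) ^ n / fact n * 1"
            by (rule mult_left_mono[OF _ w0]) simp
          finally show ?thesis by simp
        qed
        have s1: "summable (\<lambda>n. exp (- unif_rate N * t) * (unif_rate N * t) ^ n / fact n * measure_pmf.prob (iter_law N n) (E a N))"
          by (rule summable_comparison_test[OF _ sw]) (use cmp in blast)
        have s2: "summable (\<lambda>n. exp (- unif_rate N * t) * (unif_rate N * t) ^ n / fact n * measure_pmf.prob (iter_law N n) (E (1/4) N))"
          by (rule summable_comparison_test[OF _ sw]) (use cmp in blast)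
        show ?thesis unfolding ssep_prob_def
          by (rule suminf_le[OF _ s1 s2]) (rule mult_left_mono[OF pm w0])
      qed
      have "limsup (\<lambda>N::nat. ereal (1 / real N) * eln (ssep_prob N (real N ^ 2 * T) (E a N)))
          \<le> limsup (\<lambda>N::nat. ereal (1 / real N) * eln (ssep_prob N (real N ^ 2 * T) (E (1/4) N)))"
      proof (rule Limsup_mono)
        show "\<forall>\<^sub>F N in sequentially. ereal (1 / real N) * eln (ssep_prob N (real N ^ 2 * T) (E a N))
            \<le> ereal (1 / real N) * eln (ssep_prob N (real N ^ 2 * T) (E (1/4) N))"
          using eventually_ge_at_top[of "1::nat"]
        proof eventually_elim
          case (elim N)
          have m: "ssep_prob N (real N ^ 2 * T) (E a N) \<le> ssep_prob N (real N ^ 2 * T) (E (1/4) N)"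
            by (rule mono) (use T in simp)
          have "eln (ssep_prob N (real N ^ 2 * T) (E a N)) \<le> eln (ssep_prob N (real N ^ 2 * T) (E (1/4) N))"
            using m by (auto simp: eln_def)
          moreover have "ereal (1 / real N) \<ge> 0" by simp
          ultimately show ?case by (rule ereal_mult_left_mono)
        qed
      qed
      also have "\<dots> \<le> ereal (- ((1/4)^2 * csm T))" by (rule small) auto
      also have "ereal (- ((1/4)^2 * csm T)) \<le> ereal (- cX T * a ^ 2)"
      proof -
        have aA: "a^2 \<le> A0 T ^ 2" using False2 a by (intro power_mono) auto
        have "cX T * a^2 \<le> csm T / (16 * A0 T ^ 2) * a^2" by (rule mult_right_mono) (simp_all add: cX_def)
        also have "\<dots> \<le> csm T / (16 * A0 T ^ 2) * A0 T ^ 2" using cs A6 aA by (intro mult_left_mono) auto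
        also have "\<dots> = (1/4)^2 * csm T" using A6 by (simp add: field_simps power2_eq_square)
        finally show ?thesis by simp
      qed
      finally show ?thesis by (simp add: E_def)
    qed
  qed
qed

theorem theorem1p4:
  fixes T :: real
  assumes "T > 0"
  shows "\<exists>c1>0. \<forall>a\<ge>0.
     limsup (\<lambda>N::nat. ereal (1 / real N) * eln (ssep_prob N (real N ^ 2 * T)
        {s. \<bar>real_of_int (snd s)\<bar> / real N \<ge> a}))
       \<le> (if a \<le> 1 then ereal (- c1 * a ^ 2) else - \<infinity>)
   \<and> limsup (\<lambda>N::nat. ereal (1 / real N) * eln (ssep_prob N (real N ^ 2 * T)
        {s. \<bar>real_of_int (fst s 0)\<bar> / real N \<ge> a}))
       \<le> ereal (- c1 * a ^ 2)"
proof -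
  define c1 where "c1 = min (1 / (8 * kap T)) (cX T)"
  have k6: "kap T \<ge> 6" using kap_ge assms by simp
  have c1p: "c1 > 0" using cX_pos[OF assms] k6 by (simp add: c1_def)
  show ?thesis
  proof (intro exI[of _ c1] conjI allI impI c1p)
    fix a :: real assume a: "0 \<le> a"
    have J: "limsup (\<lambda>N::nat. ereal (1 / real N) * eln (ssep_prob N (real N ^ 2 * T)
        {s. \<bar>real_of_int (snd s)\<bar> / real N \<ge> a}))
       \<le> (if a \<le> 1 then ereal (- (1 / (8 * kap T)) * a ^ 2) else - \<infinity>)"
      by (rule J_part[OF assms a])
    have le1: "ereal (- (1 / (8 * kap T)) * a ^ 2) \<le> ereal (- c1 * a ^ 2)"
    proof -
      have "c1 * a^2 \<le> 1 / (8 * kap T) * a^2" by (rule mult_right_mono) (simp_all add: c1_def)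
      then show ?thesis by simp
    qed
    show "limsup (\<lambda>N::nat. ereal (1 / real N) * eln (ssep_prob N (real N ^ 2 * T)
        {s. \<bar>real_of_int (snd s)\<bar> / real N \<ge> a}))
       \<le> (if a \<le> 1 then ereal (- c1 * a ^ 2) else - \<infinity>)"
    proof (cases "a \<le> 1")
      case True
      then show ?thesis using order_trans[OF J[simplified True if_True] le1] by simp
    next
      case False
      then show ?thesis using J by simp
    qed
    have X: "limsup (\<lambda>N::nat. ereal (1 / real N) * eln (ssep_prob N (real N ^ 2 * T)
        {s. \<bar>real_of_int (fst s 0)\<bar> / real N \<ge> a})) \<le> ereal (- cX T * a ^ 2)"
      by (rule X_part[OF assms a])
    have le2: "ereal (- cX T * a ^ 2) \<le> ereal (- c1 * a ^ 2)"
    proof -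
      have "c1 * a^2 \<le> cX T * a^2" by (rule mult_right_mono) (simp_all add: c1_def)
      then show ?thesis by simp
    qed
    show "limsup (\<lambda>N::nat. ereal (1 / real N) * eln (ssep_prob N (real N ^ 2 * T)
        {s. \<bar>real_of_int (fst s 0)\<bar> / real N \<ge> a})) \<le> ereal (- c1 * a ^ 2)"
      using X le2 by (rule order_trans)
  qed
qed


end
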